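(* Let $0<q<1$, and consider the spin representation $\pi$ of $\mathcal{A}(S^2_q)$ on $\mathcal{H}=\hat{\mathcal{H}}\otimes\mathbb{C}^2$ with $D=|D|\otimes F$, grading $\gamma$ and $F=\begin{pmatrix}0&1\\1&0\end{pmatrix}$ (identifying $F$ with $\mathrm{id}\otimes F$). Then: (i) for every $x_0\in\mathcal{A}(S^2_q)$, the function $\psi(s)=\mathrm{Trace}(\gamma\pi(x_0)|D|^{-2s})$ (defined for $\mathrm{Re}\,s>1$) extends to an entire function, and $\mathrm{Res}_{s=0}s^{-1}\psi(s)=\psi(0)=\tfrac12\mathrm{Trace}(\gamma F[F,\pi(x_0)])$; (ii) for all $x_0,x_1,x_2\in\mathcal{A}(S^2_q)$, $\mathrm{Res}_{s=0}\mathrm{Trace}\bigl(\gamma\pi(x_0)[D,\pi(x_1)][D,\pi(x_2)]|D|^{-2(s+1)}\bigr)=0$. That is, the components $\varphi_0,\varphi_2$ of the Connes–Moscovici local cocycle satisfy $\varphi_0=\mathrm{ch}^F_0$ (where $\mathrm{ch}^F_0(x)=\tfrac12\mathrm{Trace}(\gamma F[F,\pi(x)])$) and $\varphi_2\equiv0$.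
   Context: $\mathcal{A}(S^2_q)$ is the unital $*$-algebra generated by $a,a^*$ and $b=b^*$ with $ba=q^2ab$, $a^*a+b^2=1$, $q^4aa^*+b^2=q^4$. $\hat{\mathcal{H}}$ has orthonormal basis $|l,m\rangle$, $l\in\mathbb{N}+\tfrac12$, $m=-l,\dots,l$ (out-of-range vectors are $0$), $|D|\,|l,m\rangle=(l+\tfrac12)|l,m\rangle$, and $\gamma=\begin{pmatrix}1&0\\0&-1\end{pmatrix}$ on $\mathbb{C}^2$ (acting as $\mathrm{id}\otimes\gamma$). With $[x]=(q^x-q^{-x})/(q-q^{-1})$, representations $\pi_\pm$ on $\hat{\mathcal{H}}$ are $\pi_\pm(a)|l,m\rangle=q^{m-l-\frac12}\frac{\sqrt{[l+m+1][l+m+2]}}{[2l+2]}|l+1,m+1\rangle-q^{m+l+\frac12}\frac{\sqrt{[l-m-1][l-m]}}{[2l]}|l-1,m+1\rangle\pm\frac{(1+q^2)q^{m-\frac12}}{[2l][2l+2]}\sqrt{[l+m+1][l-m]}\,|l,m+1\rangle$, $\pi_\pm(b)|l,m\rangle=-q^{m+1}\frac{\sqrt{[l+m+1][l-m+1]}}{[2l+2]}|l+1,m\rangle-q^{m+1}\frac{\sqrt{[l+m][l-m]}}{[2l]}|l-1,m\rangle\pm\frac{[l-m+1][l+m]-q^2[l-m][l+m+1]}{[2l][2l+2]}|l,m\rangle$, and $\pi=\pi_+\oplus\pi_-=\rho_+\otimes\mathrm{id}_{\mathbb{C}^2}+\rho_-\otimes\gamma$ with $\rho_\pm=(\pi_+\pm\pi_-)/2$.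 The function in (ii) is defined for $\mathrm{Re}\,s$ large and extends meromorphically to $\mathbb{C}$. *)

theory Defs
  imports "HOL-Complex_Analysis.Complex_Analysis"
begin

text \<open>A basis vector |l,m> \<otimes> e of H is indexed by ((l,m),e) with l \<in> N + 1/2,
  m \<in> {-l,...,l}, and e = True / False the first / second basis vector of C^2
  (the +1 / -1 eigenvectors of the grading gamma).\<close>

type_synonym idx = "(real \<times> real) \<times> bool"
type_synonym vec = "idx \<Rightarrow> complex"
type_synonym op = "vec \<Rightarrow> vec"

definition basis_idx :: "idx set" where
  "basis_idx = {((real n + 1/2, real j - (real n + 1/2)), e) | n j e. j \<le> 2 * n + 1}"

definition qnum :: "real \<Rightarrow> real \<Rightarrow> real" where
  "qnum q x = (q powr x - q powr (-x)) / (q - 1 / q)"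

text \<open>Matrix coefficient <l',m'| pi_sigma(a) |l,m>, sigma = +1 or -1.\<close>
definition ent_a :: "real \<Rightarrow> real \<Rightarrow> real \<times> real \<Rightarrow> real \<times> real \<Rightarrow> real" where
  "ent_a q \<sigma> lm' lm = (case lm' of (l', m') \<Rightarrow> case lm of (l, m) \<Rightarrow>
     (if l' = l + 1 \<and> m' = m + 1 then
        q powr (m - l - 1/2) * sqrt (qnum q (l + m + 1) * qnum q (l + m + 2)) / qnum q (2 * l + 2)
      else 0)
   + (if l' = l - 1 \<and> m' = m + 1 then
        - (q powr (m + l + 1/2) * sqrt (qnum q (l - m - 1) * qnum q (l - m)) / qnum q (2 * l))
      else 0)
   + (if l' = l \<and> m' = m + 1 then
        \<sigma> * (1 + q\<^sup>2) * q powr (m - 1/2) / (qnum q (2 * l) * qnum q (2 * l + 2))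
          * sqrt (qnum q (l + m + 1) * qnum q (l - m))
      else 0))"

definition ent_b :: "real \<Rightarrow> real \<Rightarrow> real \<times> real \<Rightarrow> real \<times> real \<Rightarrow> real" where
  "ent_b q \<sigma> lm' lm = (case lm' of (l', m') \<Rightarrow> case lm of (l, m) \<Rightarrow>
     (if l' = l + 1 \<and> m' = m then
        - (q powr (m + 1) * sqrt (qnum q (l + m + 1) * qnum q (l - m + 1)) / qnum q (2 * l + 2))
      else 0)
   + (if l' = l - 1 \<and> m' = m then
        - (q powr (m + 1) * sqrt (qnum q (l + m) * qnum q (l - m)) / qnum q (2 * l))
      else 0)
   + (if l' = l \<and> m' = m then
        \<sigma> * (qnum q (l - m + 1) * qnum q (l + m) - q\<^sup>2 * qnum q (l - m) * qnum q (l + m + 1))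
          / (qnum q (2 * l) * qnum q (2 * l + 2))
      else 0))"

text \<open>Operator on H given by a matrix (acting on finitely supported vectors;
  out-of-range basis vectors are 0).\<close>
definition mop :: "(idx \<Rightarrow> idx \<Rightarrow> complex) \<Rightarrow> op" where
  "mop M v = (\<lambda>i. if i \<in> basis_idx then (\<Sum>j\<in>{j\<in>basis_idx. v j \<noteq> 0}. M i j * v j) else 0)"

text \<open>pi = pi_+ \<oplus> pi_- : pi_+ acts on the e = True component, pi_- on e = False
  (this is rho_+ \<otimes> id + rho_- \<otimes> gamma).\<close>
definition sgn_of :: "bool \<Rightarrow> real" where
  "sgn_of e = (if e then 1 else -1)"

definition pi_a :: "real \<Rightarrow> op" where
  "pi_a q = mop (\<lambda>i' i. if snd i' = snd i then complex_of_real (ent_a q (sgn_of (snd i)) (fst i') (fst i)) else 0)"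

text \<open>pi(a^*) = pi(a)^* : the (real) matrix transposed.\<close>
definition pi_as :: "real \<Rightarrow> op" where
  "pi_as q = mop (\<lambda>i' i. if snd i' = snd i then complex_of_real (ent_a q (sgn_of (snd i)) (fst i) (fst i')) else 0)"

definition pi_b :: "real \<Rightarrow> op" where
  "pi_b q = mop (\<lambda>i' i. if snd i' = snd i then complex_of_real (ent_b q (sgn_of (snd i)) (fst i') (fst i)) else 0)"

definition id_op :: op where
  "id_op = mop (\<lambda>i' i. if i' = i then 1 else 0)"

inductive_set pi_alg :: "real \<Rightarrow> op set" for q :: real where
  unit: "id_op \<in> pi_alg q"
| gen_a: "pi_a q \<in> pi_alg q"
| gen_as: "pi_as q \<in> pi_alg q"
| gen_b: "pi_b q \<in> pi_alg q"
| add: "S \<in> pi_alg q \<Longrightarrow> T \<in> pi_alg q \<Longrightarrow> (\<lambda>v i. S v i + T v i) \<in> pi_alg q"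
| smult: "T \<in> pi_alg q \<Longrightarrow> (\<lambda>v i. c * T v i) \<in> pi_alg q"
| mult: "S \<in> pi_alg q \<Longrightarrow> T \<in> pi_alg q \<Longrightarrow> S \<circ> T \<in> pi_alg q"

definition gamma_op :: op where
  "gamma_op v = (\<lambda>i. if i \<in> basis_idx then complex_of_real (sgn_of (snd i)) * v i else 0)"

definition F_op :: op where
  "F_op v = (\<lambda>i. if i \<in> basis_idx then v (fst i, \<not> snd i) else 0)"

definition D_op :: op where
  "D_op v = (\<lambda>i. if i \<in> basis_idx then complex_of_real (fst (fst i) + 1/2) * v (fst i, \<not> snd i) else 0)"

definition absD_pow :: "complex \<Rightarrow> op" where
  "absD_pow z v = (\<lambda>i. if i \<in> basis_idx then complex_of_real (fst (fst i) + 1/2) powr z * v i else 0)"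

definition commut :: "op \<Rightarrow> op \<Rightarrow> op" where
  "commut S T = (\<lambda>v i. (S \<circ> T) v i - (T \<circ> S) v i)"

text \<open>Diagonal matrix entry <i| T |i>; Trace T is the (absolutely convergent)
  sum of these over the orthonormal basis.\<close>
definition diag_ent :: "op \<Rightarrow> idx \<Rightarrow> complex" where
  "diag_ent T i = T (\<lambda>j. if j = i then 1 else 0) i"

end

theory Submission
  imports Defs
begin


lemma polygeo_summable:
  fixes q :: real
  assumes q0: "0 < q" and q1: "q < 1"
  shows "summable (\<lambda>n. (real n + 1) ^ p * q ^ n)"
proof -
  define c where "c = (1 + q) / 2"
  have c1: "c < 1" using q1 by (simp add: c_def)
  have lim: "(\<lambda>n. ((real n + 2) / (real n + 1)) ^ p) \<longlonglongrightarrow> 1"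
  proof -
    have "(\<lambda>n. (real n + 2) / (real n + 1)) \<longlonglongrightarrow> 1" by real_asymp
    from tendsto_power[OF this, of p] show ?thesis by simp
  qed
  have "1 < c / q" using q0 q1 by (simp add: c_def field_simps)
  then have "eventually (\<lambda>n. ((real n + 2) / (real n + 1)) ^ p < c / q) sequentially"
    using lim order_tendstoD(2) by blast
  then obtain N where N: "\<And>n. n \<ge> N \<Longrightarrow> ((real n + 2) / (real n + 1)) ^ p < c / q"
    by (auto simp: eventually_sequentially)
  show ?thesis
  proof (rule summable_ratio_test[OF c1])
    fix n assume "n \<ge> N"
    then have h: "((real n + 2) / (real n + 1)) ^ p \<le> c / q" using N by fastforce
    have "(real (Suc n) + 1) ^ p = ((real n + 2) / (real n + 1)) ^ p * (real n + 1) ^ p"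
      by (simp add: power_divide field_simps)
    then have "norm ((real (Suc n) + 1) ^ p * q ^ Suc n) = ((real n + 2) / (real n + 1)) ^ p * q * ((real n + 1) ^ p * q ^ n)"
      using q0 by simp
    also have "\<dots> \<le> (c / q) * q * ((real n + 1) ^ p * q ^ n)"
      using h q0 by (intro mult_right_mono) auto
    also have "\<dots> = c * norm ((real n + 1) ^ p * q ^ n)" using q0 by simp
    finally show "norm ((real (Suc n) + 1) ^ p * q ^ Suc n) \<le> c * norm ((real n + 1) ^ p * q ^ n)" .
  qed
qed


locale qq = fixes q :: real assumes q0: "0 < q" and q1: "q < 1"
begin

lemma K_pos: "0 < 1 - q\<^sup>2" using q0 q1 by (simp add: power2_eq_square) (smt (verit) mult_less_cancel_right1)

lemma qnum_alt: "qnum q x = (q powr (-x) - q powr x) * q / (1 - q\<^sup>2)"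
proof -
  have "q - 1/q = - (1 - q\<^sup>2) / q" using q0 by (simp add: field_simps power2_eq_square)
  then show ?thesis unfolding qnum_def using q0 K_pos by (simp add: field_simps)
qed

lemma qnum_nonneg: "0 \<le> x \<Longrightarrow> 0 \<le> qnum q x"
  unfolding qnum_alt using q0 q1 K_pos
  by (intro divide_nonneg_pos mult_nonneg_nonneg) (auto intro!: powr_mono')

lemma qnum_upper: "qnum q x \<le> q powr (1 - x) / (1 - q\<^sup>2)"
proof -
  have "(q powr (-x) - q powr x) * q \<le> q powr (-x) * q" using q0 by simp
  also have "\<dots> = q powr (1 - x)" using q0 powr_add[of q "-x" 1] by simp
  finally show ?thesis unfolding qnum_alt using K_pos by (simp add: divide_right_mono)
qed

lemma qnum_lower: "1 \<le> x \<Longrightarrow> q powr (1 - x) \<le> qnum q x"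
proof -
  assume x: "1 \<le> x"
  have "q powr (1 + x) \<le> q powr (3 - x)" using x q0 q1 by (intro powr_mono') auto
  moreover have "q powr (1 - x) * q\<^sup>2 = q powr (3 - x)" using q0
    using powr_add[of q "1-x" 2] powr_numeral[of q "num.Bit0 num.One"] by simp
  ultimately have "q powr (1 - x) * (1 - q\<^sup>2) \<le> (q powr (-x) - q powr x) * q"
    using q0 powr_add[of q 1 x] powr_add[of q "-x" 1] by (simp add: algebra_simps)
  then show ?thesis unfolding qnum_alt using K_pos by (simp add: field_simps)
qed


lemma qnum_pos: "1 \<le> z \<Longrightarrow> 0 < qnum q z"
  using qnum_lower[of z] q0 by (smt (verit) powr_gt_zero)

lemma inv_qnum: "1 \<le> z \<Longrightarrow> 1 / qnum q z \<le> q powr (z - 1)"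
proof -
  assume z: "1 \<le> z"
  have "q powr (1 - z) \<le> qnum q z" "0 < q powr (1 - z)" using qnum_lower[OF z] q0 by auto
  then have "1 / qnum q z \<le> 1 / q powr (1 - z)" using qnum_pos[OF z] by (intro divide_left_mono) (auto intro: mult_pos_pos)
  also have "\<dots> = q powr (z - 1)" using q0 by (simp add: powr_minus_divide[symmetric])
  finally show ?thesis .
qed

lemma sqrt_qnum: "0 \<le> x \<Longrightarrow> 0 \<le> y \<Longrightarrow> sqrt (qnum q x * qnum q y) \<le> q powr (1 - (x + y) / 2) / (1 - q\<^sup>2)"
proof -
  assume x: "0 \<le> x" and y: "0 \<le> y"
  let ?K = "1 - q\<^sup>2"
  have "qnum q x * qnum q y \<le> (q powr (1 - x) / ?K) * (q powr (1 - y) / ?K)"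
    using qnum_upper[of x] qnum_upper[of y] qnum_nonneg[OF x] qnum_nonneg[OF y]
    by (intro mult_mono) auto
  also have "\<dots> = (q powr (1 - (x + y) / 2) / ?K)\<^sup>2"
  proof -
    have "q powr (1-x) * q powr (1-y) = q powr ((1-x)+(1-y))" by (rule powr_add[symmetric])
    also have "\<dots> = q powr ((1 - (x+y)/2) + (1 - (x+y)/2))"
      by (intro arg_cong[where f="(powr) q"]) (simp add: field_simps)
    also have "\<dots> = q powr (1 - (x+y)/2) * q powr (1 - (x+y)/2)" by (rule powr_add)
    finally have pr: "q powr (1-x) * q powr (1-y) = q powr (1 - (x+y)/2) * q powr (1 - (x+y)/2)" .
    show ?thesis by (metis pr times_divide_times_eq power2_eq_square)
  qed
  finally have "sqrt (qnum q x * qnum q y) \<le> sqrt ((q powr (1 - (x + y) / 2) / ?K)\<^sup>2)"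
    by (rule real_sqrt_le_mono)
  also have "\<dots> = q powr (1 - (x + y) / 2) / ?K" using K_pos by simp
  finally show ?thesis .
qed

lemma pbound:
  assumes "0 \<le> S" "S \<le> q powr a / (1 - q\<^sup>2)" "0 \<le> I" "I \<le> q powr b" "0 \<le> J" "J \<le> q powr c"
  shows "q powr e * S * I * J \<le> q powr (e + a + b + c) / (1 - q\<^sup>2)"
proof -
  have "q powr e * S * I * J \<le> q powr e * (q powr a / (1 - q\<^sup>2)) * q powr b * q powr c"
    using assms by (intro mult_mono mult_nonneg_nonneg) auto
  also have "\<dots> = q powr (e + a + b + c) / (1 - q\<^sup>2)"
    by (simp add: powr_add)
  finally show ?thesis .
qed

lemma powr_le1: "0 \<le> c \<Longrightarrow> q powr c \<le> 1"
  using powr_mono'[of 0 c q] q0 q1 by simp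

lemma powr_anti: "d \<le> c \<Longrightarrow> q powr c \<le> q powr d"
  using powr_mono'[of d c q] q0 q1 by simp


lemma Kle1: "1 - q\<^sup>2 \<le> 1" by simp

lemma invK: "1 / (1 - q\<^sup>2) \<le> 1 / (1 - q\<^sup>2)\<^sup>2"
  using K_pos Kle1 by (simp add: power2_eq_square divide_simps)

lemma ent_a_terms:
  assumes hl: "1/2 \<le> l" and hm1: "-l \<le> m" and hm2: "m \<le> l" and hint: "m = l \<or> m \<le> l - 1"
  defines "TA \<equiv> q powr (m - l - 1/2) * sqrt (qnum q (l + m + 1) * qnum q (l + m + 2)) / qnum q (2 * l + 2)"
    and "TB \<equiv> q powr (m + l + 1/2) * sqrt (qnum q (l - m - 1) * qnum q (l - m)) / qnum q (2 * l)"
    and "X \<equiv> q powr (m - 1/2) * sqrt (qnum q (l + m + 1) * qnum q (l - m)) * (1 / qnum q (2 * l)) * (1 / qnum q (2 * l + 2))"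
  shows "0 \<le> TA" "TA \<le> 1 / (1 - q\<^sup>2)" "0 \<le> TB" "TB \<le> 1 / (1 - q\<^sup>2)" "0 \<le> X" "X \<le> q powr l / (1 - q\<^sup>2)"
proof -
  have Q1: "0 < qnum q (2*l)" "0 < qnum q (2*l+2)" using qnum_pos hl by auto
  show "0 \<le> TA" unfolding TA_def using Q1 qnum_nonneg hm1 by (auto intro!: mult_nonneg_nonneg divide_nonneg_pos)
  show "0 \<le> X" unfolding X_def using Q1 qnum_nonneg hm1 hm2 by (auto intro!: mult_nonneg_nonneg)
  have S1: "0 \<le> sqrt (qnum q (l + m + 1) * qnum q (l + m + 2))" using qnum_nonneg hm1 by auto
  have "TA = q powr (m - l - 1/2) * sqrt (qnum q (l + m + 1) * qnum q (l + m + 2)) * (1 / qnum q (2 * l + 2)) * 1"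
    unfolding TA_def by simp
  also have "\<dots> \<le> q powr ((m - l - 1/2) + (1 - ((l + m + 1) + (l + m + 2)) / 2) + (2 * l + 2 - 1) + 0) / (1 - q\<^sup>2)"
    using S1 sqrt_qnum[of "l+m+1" "l+m+2"] hm1 Q1 inv_qnum[of "2*l+2"] hl
    by (intro pbound) auto
  also have "\<dots> = 1 / (1 - q\<^sup>2)" using q0 by (simp add: field_simps)
  finally show "TA \<le> 1 / (1 - q\<^sup>2)" .
  show "0 \<le> TB"
  proof (cases "m = l")
    case True then show ?thesis unfolding TB_def by (simp add: qnum_def)
  next
    case False then have "m \<le> l - 1" using hint by auto
    then show ?thesis unfolding TB_def using Q1 qnum_nonneg by (auto intro!: mult_nonneg_nonneg divide_nonneg_pos)
  qed
  show "TB \<le> 1 / (1 - q\<^sup>2)"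
  proof (cases "m = l")
    case True then show ?thesis unfolding TB_def using K_pos q0 by (simp add: qnum_def)
  next
    case False then have h: "m \<le> l - 1" using hint by auto
    have S1: "0 \<le> sqrt (qnum q (l - m - 1) * qnum q (l - m))" using qnum_nonneg h by auto
    have "TB = q powr (m + l + 1/2) * sqrt (qnum q (l - m - 1) * qnum q (l - m)) * (1 / qnum q (2 * l)) * 1"
      unfolding TB_def by simp
    also have "\<dots> \<le> q powr ((m + l + 1/2) + (1 - ((l - m - 1) + (l - m)) / 2) + (2 * l - 1) + 0) / (1 - q\<^sup>2)"
      using S1 sqrt_qnum[of "l-m-1" "l-m"] h Q1 inv_qnum[of "2*l"] hl
      by (intro pbound) auto
    also have "\<dots> = q powr (2 * m + 2 * l + 1) / (1 - q\<^sup>2)" by (rule arg_cong[where f="\<lambda>t. q powr t / (1 - q\<^sup>2)"]) (simp add: field_simps)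
    also have "\<dots> \<le> 1 / (1 - q\<^sup>2)" using powr_le1[of "2 * m + 2 * l + 1"] hm1 K_pos
      by (intro divide_right_mono) auto
    finally show ?thesis .
  qed
  have S2: "0 \<le> sqrt (qnum q (l + m + 1) * qnum q (l - m))" using qnum_nonneg hm1 hm2 by auto
  have "X \<le> q powr ((m - 1/2) + (1 - ((l + m + 1) + (l - m)) / 2) + (2 * l - 1) + (2 * l + 2 - 1)) / (1 - q\<^sup>2)"
    unfolding X_def
    using S2 sqrt_qnum[of "l+m+1" "l-m"] hm1 hm2 Q1 inv_qnum[of "2*l"] inv_qnum[of "2*l+2"] hl
    by (intro pbound) auto
  also have "\<dots> = q powr (m + 3 * l) / (1 - q\<^sup>2)" by (rule arg_cong[where f="\<lambda>t. q powr t / (1 - q\<^sup>2)"]) (simp add: field_simps)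
  also have "\<dots> \<le> q powr l / (1 - q\<^sup>2)" using powr_anti[of l "m + 3 * l"] hm1 hl K_pos
    by (intro divide_right_mono) auto
  finally show "X \<le> q powr l / (1 - q\<^sup>2)" .
qed


lemma ent_a_props:
  assumes hl: "1/2 \<le> l" and hm1: "-l \<le> m" and hm2: "m \<le> l" and hint: "m = l \<or> m \<le> l - 1"
    and sg: "\<bar>\<sigma>\<bar> \<le> 1"
  shows "\<bar>ent_a q \<sigma> (l',m') (l,m)\<bar> \<le> 4 / (1 - q\<^sup>2)\<^sup>2"
    and "\<bar>ent_a q 1 (l',m') (l,m) - ent_a q (-1) (l',m') (l,m)\<bar> \<le> 4 / (1 - q\<^sup>2)\<^sup>2 * q powr l"
    and "ent_a q 1 (l',m') (l,m) - ent_a q (-1) (l',m') (l,m) \<noteq> 0 \<Longrightarrow> l' = l"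
    and "ent_a q \<sigma> (l',m') (l,m) \<noteq> 0 \<Longrightarrow> \<bar>l' - l\<bar> \<le> 1 \<and> \<bar>m' - m\<bar> \<le> 1"
proof -
  define TA where "TA \<equiv> q powr (m - l - 1/2) * sqrt (qnum q (l + m + 1) * qnum q (l + m + 2)) / qnum q (2 * l + 2)"
  define TB where "TB \<equiv> q powr (m + l + 1/2) * sqrt (qnum q (l - m - 1) * qnum q (l - m)) / qnum q (2 * l)"
  define X where "X \<equiv> q powr (m - 1/2) * sqrt (qnum q (l + m + 1) * qnum q (l - m)) * (1 / qnum q (2 * l)) * (1 / qnum q (2 * l + 2))"
  note T = ent_a_terms[OF hl hm1 hm2 hint, folded TA_def TB_def X_def]
  have eq: "ent_a q s (l',m') (l,m) = (if l' = l+1 \<and> m' = m+1 then TA else 0) + (if l' = l-1 \<and> m' = m+1 then -TB else 0) + (if l' = l \<and> m' = m+1 then s*(1+q\<^sup>2)*X else 0)" for s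
    unfolding ent_a_def TA_def TB_def X_def by simp
  have K: "0 < 1 - q\<^sup>2" "1 / (1 - q\<^sup>2) \<le> 1 / (1 - q\<^sup>2)\<^sup>2" using K_pos invK by auto
  have pl: "q powr l \<le> 1" using powr_le1 hl by auto
  have q2: "1 + q\<^sup>2 \<le> 2" using q0 q1 by (simp add: power2_eq_square) (smt (verit) mult_le_cancel_left1)
  have Xb: "\<bar>s*(1+q\<^sup>2)*X\<bar> \<le> 2 * (q powr l / (1 - q\<^sup>2))" if "\<bar>s\<bar> \<le> 1" for s
  proof -
    have "\<bar>s*(1+q\<^sup>2)*X\<bar> = \<bar>s\<bar> * (1+q\<^sup>2) * X" using T(5) by (simp add: abs_mult)
    also have "\<dots> \<le> 1 * 2 * (q powr l / (1 - q\<^sup>2))" using that q2 T(5) T(6)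
      by (intro mult_mono) auto
    finally show ?thesis by simp
  qed
  have Xb2: "2 * (q powr l / (1 - q\<^sup>2)) \<le> 4 / (1 - q\<^sup>2)\<^sup>2"
  proof -
    have "q powr l / (1 - q\<^sup>2) \<le> 1 / (1 - q\<^sup>2)" using pl K by (intro divide_right_mono) auto
    then have a: "q powr l / (1 - q\<^sup>2) \<le> 1 / (1 - q\<^sup>2)\<^sup>2" using K(2) by (rule order_trans)
    have c: "0 \<le> 1 / (1 - q\<^sup>2)\<^sup>2" by simp
    have "2 * (q powr l / (1 - q\<^sup>2)) \<le> 4 * (1 / (1 - q\<^sup>2)\<^sup>2)" using a c by linarith
    then show ?thesis by simp
  qed
  show "\<bar>ent_a q \<sigma> (l',m') (l,m)\<bar> \<le> 4 / (1 - q\<^sup>2)\<^sup>2"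
    unfolding eq using T Xb[OF sg] Xb2 K by auto
  have deq: "ent_a q 1 (l',m') (l,m) - ent_a q (-1) (l',m') (l,m) = (if l' = l \<and> m' = m+1 then 2*((1+q\<^sup>2)*X) else 0)"
    unfolding eq by (auto simp: algebra_simps)
  have "\<bar>2*((1+q\<^sup>2)*X)\<bar> \<le> 2 * (2 * (q powr l / (1 - q\<^sup>2)))" using Xb[of 1] by simp
  also have "\<dots> \<le> 4 / (1 - q\<^sup>2)\<^sup>2 * q powr l" using K q0
    by (simp add: divide_simps power2_eq_square)
  finally show "\<bar>ent_a q 1 (l',m') (l,m) - ent_a q (-1) (l',m') (l,m)\<bar> \<le> 4 / (1 - q\<^sup>2)\<^sup>2 * q powr l"
    unfolding deq using q0 K by auto
  show "ent_a q 1 (l',m') (l,m) - ent_a q (-1) (l',m') (l,m) \<noteq> 0 \<Longrightarrow> l' = l"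
    unfolding deq by (auto split: if_splits)
  show "ent_a q \<sigma> (l',m') (l,m) \<noteq> 0 \<Longrightarrow> \<bar>l' - l\<bar> \<le> 1 \<and> \<bar>m' - m\<bar> \<le> 1"
    unfolding eq by (auto split: if_splits)
qed


lemma qprod_bound: "0 \<le> x \<Longrightarrow> 0 \<le> y \<Longrightarrow> qnum q x * qnum q y \<le> q powr (2 - x - y) / (1 - q\<^sup>2)\<^sup>2"
proof -
  assume x: "0 \<le> x" and y: "0 \<le> y"
  have "qnum q x * qnum q y \<le> (q powr (1 - x) / (1 - q\<^sup>2)) * (q powr (1 - y) / (1 - q\<^sup>2))"
    using qnum_upper[of x] qnum_upper[of y] qnum_nonneg[OF x] qnum_nonneg[OF y]
    by (intro mult_mono) auto
  also have "\<dots> = q powr ((1 - x) + (1 - y)) / (1 - q\<^sup>2)\<^sup>2"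
    unfolding powr_add by (simp add: power2_eq_square)
  also have "\<dots> = q powr (2 - x - y) / (1 - q\<^sup>2)\<^sup>2"
    by (rule arg_cong[where f="\<lambda>t. q powr t / (1 - q\<^sup>2)\<^sup>2"]) (simp add: field_simps)
  finally show ?thesis .
qed

lemma ent_b_terms:
  assumes hl: "1/2 \<le> l" and hm1: "-l \<le> m" and hm2: "m \<le> l"
  defines "TA \<equiv> q powr (m + 1) * sqrt (qnum q (l + m + 1) * qnum q (l - m + 1)) / qnum q (2 * l + 2)"
    and "TB \<equiv> q powr (m + 1) * sqrt (qnum q (l + m) * qnum q (l - m)) / qnum q (2 * l)"
    and "Y \<equiv> (qnum q (l - m + 1) * qnum q (l + m) - q\<^sup>2 * qnum q (l - m) * qnum q (l + m + 1)) / (qnum q (2 * l) * qnum q (2 * l + 2))"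
  shows "0 \<le> TA" "TA \<le> 1 / (1 - q\<^sup>2)" "0 \<le> TB" "TB \<le> 1 / (1 - q\<^sup>2)" "\<bar>Y\<bar> \<le> 2 * q powr l / (1 - q\<^sup>2)\<^sup>2"
proof -
  have Q1: "0 < qnum q (2*l)" "0 < qnum q (2*l+2)" using qnum_pos hl by auto
  show "0 \<le> TA" unfolding TA_def using Q1 qnum_nonneg hm1 hm2 by (auto intro!: mult_nonneg_nonneg divide_nonneg_pos)
  show "0 \<le> TB" unfolding TB_def using Q1 qnum_nonneg hm1 hm2 by (auto intro!: mult_nonneg_nonneg divide_nonneg_pos)
  have S1: "0 \<le> sqrt (qnum q (l + m + 1) * qnum q (l - m + 1))" using qnum_nonneg hm1 hm2 by auto
  have "TA = q powr (m + 1) * sqrt (qnum q (l + m + 1) * qnum q (l - m + 1)) * (1 / qnum q (2 * l + 2)) * 1"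
    unfolding TA_def by simp
  also have "\<dots> \<le> q powr ((m + 1) + (1 - ((l + m + 1) + (l - m + 1)) / 2) + (2 * l + 2 - 1) + 0) / (1 - q\<^sup>2)"
    using S1 sqrt_qnum[of "l+m+1" "l-m+1"] hm1 hm2 Q1 inv_qnum[of "2*l+2"] hl
    by (intro pbound) auto
  also have "\<dots> = q powr (m + l + 2) / (1 - q\<^sup>2)"
    by (rule arg_cong[where f="\<lambda>t. q powr t / (1 - q\<^sup>2)"]) (simp add: field_simps)
  also have "\<dots> \<le> 1 / (1 - q\<^sup>2)" using powr_le1[of "m + l + 2"] hm1 K_pos
    by (intro divide_right_mono) auto
  finally show "TA \<le> 1 / (1 - q\<^sup>2)" .
  have S2: "0 \<le> sqrt (qnum q (l + m) * qnum q (l - m))" using qnum_nonneg hm1 hm2 by auto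
  have "TB = q powr (m + 1) * sqrt (qnum q (l + m) * qnum q (l - m)) * (1 / qnum q (2 * l)) * 1"
    unfolding TB_def by simp
  also have "\<dots> \<le> q powr ((m + 1) + (1 - ((l + m) + (l - m)) / 2) + (2 * l - 1) + 0) / (1 - q\<^sup>2)"
    using S2 sqrt_qnum[of "l+m" "l-m"] hm1 hm2 Q1 inv_qnum[of "2*l"] hl
    by (intro pbound) auto
  also have "\<dots> = q powr (m + l + 1) / (1 - q\<^sup>2)"
    by (rule arg_cong[where f="\<lambda>t. q powr t / (1 - q\<^sup>2)"]) (simp add: field_simps)
  also have "\<dots> \<le> 1 / (1 - q\<^sup>2)" using powr_le1[of "m + l + 1"] hm1 K_pos
    by (intro divide_right_mono) auto
  finally show "TB \<le> 1 / (1 - q\<^sup>2)" .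
  let ?P1 = "qnum q (l - m + 1) * qnum q (l + m)" and ?P2 = "qnum q (l - m) * qnum q (l + m + 1)"
  have P1: "0 \<le> ?P1" "?P1 \<le> q powr (1 - 2*l) / (1 - q\<^sup>2)\<^sup>2"
    using qnum_nonneg hm1 hm2 qprod_bound[of "l - m + 1" "l + m"] by (auto simp: algebra_simps)
  have P2: "0 \<le> ?P2" "?P2 \<le> q powr (1 - 2*l) / (1 - q\<^sup>2)\<^sup>2"
    using qnum_nonneg hm1 hm2 qprod_bound[of "l - m" "l + m + 1"] by (auto simp: algebra_simps)
  have q2: "q\<^sup>2 \<le> 1" using q0 q1 by (simp add: power_le_one)
  have a: "q\<^sup>2 * ?P2 \<le> ?P2" using q2 P2(1) by (simp add: mult_left_le_one_le)
  have b: "0 \<le> q\<^sup>2 * ?P2" using P2(1) by simp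
  have N0: "\<bar>?P1 - q\<^sup>2 * ?P2\<bar> \<le> 2 * (q powr (1 - 2*l) / (1 - q\<^sup>2)\<^sup>2)"
  proof -
    define B where "B = q powr (1 - 2*l) / (1 - q\<^sup>2)\<^sup>2"
    have "\<bar>?P1 - q\<^sup>2 * ?P2\<bar> \<le> 2 * B" using a b P1 P2 unfolding B_def[symmetric] by linarith
    then show ?thesis unfolding B_def .
  qed
  then have N: "\<bar>?P1 - q\<^sup>2 * qnum q (l - m) * qnum q (l + m + 1)\<bar> \<le> 2 * (q powr (1 - 2*l) / (1 - q\<^sup>2)\<^sup>2)"
    by (simp add: mult.assoc)
  have "\<bar>Y\<bar> = \<bar>?P1 - q\<^sup>2 * qnum q (l - m) * qnum q (l + m + 1)\<bar> * (1 / qnum q (2 * l)) * (1 / qnum q (2 * l + 2))"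
    unfolding Y_def using Q1 by (simp add: abs_divide abs_mult)
  also have "\<dots> \<le> (2 * (q powr (1 - 2*l) / (1 - q\<^sup>2)\<^sup>2)) * q powr (2 * l - 1) * q powr (2 * l + 2 - 1)"
    using N Q1 inv_qnum[of "2*l"] inv_qnum[of "2*l+2"] hl by (intro mult_mono mult_nonneg_nonneg) auto
  also have "\<dots> = 2 * q powr ((1 - 2*l) + (2 * l - 1) + (2 * l + 2 - 1)) / (1 - q\<^sup>2)\<^sup>2"
    unfolding powr_add by simp
  also have "\<dots> = 2 * q powr (2 * l + 1) / (1 - q\<^sup>2)\<^sup>2"
    by (rule arg_cong[where f="\<lambda>t. 2 * q powr t / (1 - q\<^sup>2)\<^sup>2"]) (simp add: field_simps)
  also have "\<dots> \<le> 2 * q powr l / (1 - q\<^sup>2)\<^sup>2" using powr_anti[of l "2 * l + 1"] hl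
    by (intro divide_right_mono) auto
  finally show "\<bar>Y\<bar> \<le> 2 * q powr l / (1 - q\<^sup>2)\<^sup>2" .
qed


lemma ent_b_props:
  assumes hl: "1/2 \<le> l" and hm1: "-l \<le> m" and hm2: "m \<le> l"
    and sg: "\<bar>\<sigma>\<bar> \<le> 1"
  shows "\<bar>ent_b q \<sigma> (l',m') (l,m)\<bar> \<le> 4 / (1 - q\<^sup>2)\<^sup>2"
    and "\<bar>ent_b q 1 (l',m') (l,m) - ent_b q (-1) (l',m') (l,m)\<bar> \<le> 4 / (1 - q\<^sup>2)\<^sup>2 * q powr l"
    and "ent_b q 1 (l',m') (l,m) - ent_b q (-1) (l',m') (l,m) \<noteq> 0 \<Longrightarrow> l' = l"
    and "ent_b q \<sigma> (l',m') (l,m) \<noteq> 0 \<Longrightarrow> \<bar>l' - l\<bar> \<le> 1 \<and> \<bar>m' - m\<bar> \<le> 1"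
proof -
  define TA where "TA \<equiv> q powr (m + 1) * sqrt (qnum q (l + m + 1) * qnum q (l - m + 1)) / qnum q (2 * l + 2)"
  define TB where "TB \<equiv> q powr (m + 1) * sqrt (qnum q (l + m) * qnum q (l - m)) / qnum q (2 * l)"
  define Y where "Y \<equiv> (qnum q (l - m + 1) * qnum q (l + m) - q\<^sup>2 * qnum q (l - m) * qnum q (l + m + 1)) / (qnum q (2 * l) * qnum q (2 * l + 2))"
  note T = ent_b_terms[OF hl hm1 hm2, folded TA_def TB_def Y_def]
  have eq: "ent_b q s (l',m') (l,m) = (if l' = l+1 \<and> m' = m then -TA else 0) + (if l' = l-1 \<and> m' = m then -TB else 0) + (if l' = l \<and> m' = m then s*Y else 0)" for s
    unfolding ent_b_def TA_def TB_def Y_def by simp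
  have K: "0 < 1 - q\<^sup>2" "1 / (1 - q\<^sup>2) \<le> 1 / (1 - q\<^sup>2)\<^sup>2" using K_pos invK by auto
  have pl: "q powr l \<le> 1" using powr_le1 hl by auto
  have c: "0 \<le> 1 / (1 - q\<^sup>2)\<^sup>2" by simp
  have TA4: "TA \<le> 4 * (1 / (1 - q\<^sup>2)\<^sup>2)" "TB \<le> 4 * (1 / (1 - q\<^sup>2)\<^sup>2)" using T K c by linarith+
  have "2 * q powr l / (1 - q\<^sup>2)\<^sup>2 \<le> 2 * 1 / (1 - q\<^sup>2)\<^sup>2" using pl by (intro divide_right_mono) auto
  then have Y4: "\<bar>Y\<bar> \<le> 4 * (1 / (1 - q\<^sup>2)\<^sup>2)" using T(5) c by simp
  have sY: "\<bar>s * Y\<bar> \<le> \<bar>Y\<bar>" if "\<bar>s\<bar> \<le> 1" for s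
    using that by (simp add: abs_mult mult_left_le_one_le)
  show "\<bar>ent_b q \<sigma> (l',m') (l,m)\<bar> \<le> 4 / (1 - q\<^sup>2)\<^sup>2"
    unfolding eq using T TA4 Y4 sY[OF sg] by auto
  have deq: "ent_b q 1 (l',m') (l,m) - ent_b q (-1) (l',m') (l,m) = (if l' = l \<and> m' = m then 2*Y else 0)"
    unfolding eq by (auto simp: algebra_simps)
  have "\<bar>2*Y\<bar> \<le> 2 * (2 * q powr l / (1 - q\<^sup>2)\<^sup>2)" using T(5) by simp
  also have "\<dots> = 4 / (1 - q\<^sup>2)\<^sup>2 * q powr l" by simp
  finally show "\<bar>ent_b q 1 (l',m') (l,m) - ent_b q (-1) (l',m') (l,m)\<bar> \<le> 4 / (1 - q\<^sup>2)\<^sup>2 * q powr l"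
    unfolding deq using q0 K by auto
  show "ent_b q 1 (l',m') (l,m) - ent_b q (-1) (l',m') (l,m) \<noteq> 0 \<Longrightarrow> l' = l"
    unfolding deq by (auto split: if_splits)
  show "ent_b q \<sigma> (l',m') (l,m) \<noteq> 0 \<Longrightarrow> \<bar>l' - l\<bar> \<le> 1 \<and> \<bar>m' - m\<bar> \<le> 1"
    unfolding eq by (auto split: if_splits)
qed

end


definition delta :: "idx \<Rightarrow> vec" where "delta j = (\<lambda>i. if i = j then 1 else 0)"
definition mat :: "op \<Rightarrow> idx \<Rightarrow> idx \<Rightarrow> complex" where "mat T i j = T (delta j) i"
definition fs :: "vec \<Rightarrow> bool" where "fs v \<longleftrightarrow> finite {i. v i \<noteq> 0}"
definition lin :: "op \<Rightarrow> bool" where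
  "lin T \<longleftrightarrow> (\<forall>v. fs v \<longrightarrow> fs (T v)) \<and>
     (\<forall>u v. fs u \<longrightarrow> fs v \<longrightarrow> T (\<lambda>i. u i + v i) = (\<lambda>i. T u i + T v i)) \<and>
     (\<forall>c v. fs v \<longrightarrow> T (\<lambda>i. c * v i) = (\<lambda>i. c * T v i)) \<and>
     (\<forall>v i. i \<notin> basis_idx \<longrightarrow> T v i = 0)"

lemma fs_delta[simp]: "fs (delta j)" unfolding fs_def delta_def by simp
lemma fs_zero[simp]: "fs (\<lambda>i. 0)" unfolding fs_def by simp
lemma fs_add: "fs u \<Longrightarrow> fs v \<Longrightarrow> fs (\<lambda>i. u i + v i)"
  unfolding fs_def by (rule finite_subset[of _ "{i. u i \<noteq> 0} \<union> {i. v i \<noteq> 0}"]) auto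
lemma fs_scale: "fs v \<Longrightarrow> fs (\<lambda>i. c * v i)"
  unfolding fs_def by (rule finite_subset[of _ "{i. v i \<noteq> 0}"]) auto
lemma fs_sum: "finite A \<Longrightarrow> (\<And>k. k \<in> A \<Longrightarrow> fs (f k)) \<Longrightarrow> fs (\<lambda>i. \<Sum>k\<in>A. f k i)"
proof (induction A rule: finite_induct)
  case empty then show ?case by simp
next
  case (insert x F) then show ?case by (simp add: fs_add)
qed

lemma linD: assumes "lin T"
  shows "fs v \<Longrightarrow> fs (T v)" "fs u \<Longrightarrow> fs v \<Longrightarrow> T (\<lambda>i. u i + v i) = (\<lambda>i. T u i + T v i)"
    "fs v \<Longrightarrow> T (\<lambda>i. c * v i) = (\<lambda>i. c * T v i)" "i \<notin> basis_idx \<Longrightarrow> T v i = 0"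
  using assms unfolding lin_def by blast+

lemma lin_zero: "lin T \<Longrightarrow> T (\<lambda>i. 0) = (\<lambda>i. 0)"
  using linD(3)[of T "\<lambda>i. 0" 0] by simp

lemma lin_sum: assumes lT: "lin T" shows "finite A \<Longrightarrow> (\<And>k. k \<in> A \<Longrightarrow> fs (f k)) \<Longrightarrow>
   T (\<lambda>i. \<Sum>k\<in>A. f k i) = (\<lambda>i. \<Sum>k\<in>A. T (f k) i)"
proof (induction A rule: finite_induct)
  case empty then show ?case by (simp add: lin_zero lT)
next
  case (insert x F)
  note lT[simp]
  have "T (\<lambda>i. \<Sum>k\<in>insert x F. f k i) = T (\<lambda>i. f x i + (\<Sum>k\<in>F. f k i))"
    using insert by simp
  also have "\<dots> = (\<lambda>i. T (f x) i + T (\<lambda>i. \<Sum>k\<in>F. f k i) i)"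
    using insert by (intro linD(2)) (auto intro: fs_sum)
  finally show ?case using insert by simp
qed

lemma expand: assumes A: "finite A" "{i. v i \<noteq> 0} \<subseteq> A"
  shows "v = (\<lambda>i. \<Sum>k\<in>A. v k * delta k i)"
proof (rule ext)
  fix i
  show "v i = (\<Sum>k\<in>A. v k * delta k i)"
  proof (cases "i \<in> A")
    case True
    then have "(\<Sum>k\<in>A. v k * delta k i) = (\<Sum>k\<in>{i}. v k * delta k i)"
      using A by (intro sum.mono_neutral_right) (auto simp: delta_def)
    then show ?thesis by (simp add: delta_def)
  next
    case False
    then have "v i = 0" using A by auto
    moreover have "(\<Sum>k\<in>A. v k * delta k i) = 0" using False by (intro sum.neutral) (auto simp: delta_def)
    ultimately show ?thesis by simp
  qed
qed

lemma lin_apply: assumes "lin T" "finite A" "{i. v i \<noteq> 0} \<subseteq> A"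
  shows "T v i = (\<Sum>k\<in>A. v k * mat T i k)"
proof -
  have "T v = T (\<lambda>i. \<Sum>k\<in>A. v k * delta k i)" using expand[OF assms(2,3)] by (rule arg_cong)
  also have "\<dots> = (\<lambda>i. \<Sum>k\<in>A. T (\<lambda>i. v k * delta k i) i)"
    using assms by (intro lin_sum) (auto intro: fs_scale)
  also have "\<dots> = (\<lambda>i. \<Sum>k\<in>A. v k * mat T i k)"
    using assms by (simp add: linD(3) mat_def)
  finally show ?thesis by simp
qed

lemma lin_comp: assumes S: "lin S" and T: "lin T" shows "lin (S \<circ> T)"
  unfolding lin_def
proof (intro conjI allI impI)
  fix v assume "fs v" then show "fs ((S \<circ> T) v)" using linD(1)[OF S] linD(1)[OF T] by simp
next
  fix u v assume u: "fs u" and v: "fs v"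
  show "(S \<circ> T) (\<lambda>i. u i + v i) = (\<lambda>i. (S \<circ> T) u i + (S \<circ> T) v i)"
    using linD(2)[OF T u v] linD(2)[OF S linD(1)[OF T u] linD(1)[OF T v]] by simp
next
  fix c v assume v: "fs v"
  show "(S \<circ> T) (\<lambda>i. c * v i) = (\<lambda>i. c * (S \<circ> T) v i)"
    using linD(3)[OF T v, of c] linD(3)[OF S linD(1)[OF T v], of c] by simp
next
  fix v i assume "i \<notin> basis_idx" then show "(S \<circ> T) v i = 0" using linD(4)[OF S] by simp
qed

lemma lin_add: assumes S: "lin S" and T: "lin T" shows "lin (\<lambda>v i. S v i + T v i)"
  unfolding lin_def
proof (intro conjI allI impI)
  fix v assume "fs v" then show "fs (\<lambda>i. S v i + T v i)" using linD(1)[OF S] linD(1)[OF T] fs_add by blast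
next
  fix u v assume u: "fs u" and v: "fs v"
  show "(\<lambda>i. S (\<lambda>i. u i + v i) i + T (\<lambda>i. u i + v i) i) = (\<lambda>i. (S u i + T u i) + (S v i + T v i))"
    using linD(2)[OF T u v] linD(2)[OF S u v] by (simp add: algebra_simps)
next
  fix c v assume v: "fs v"
  show "(\<lambda>i. S (\<lambda>i. c * v i) i + T (\<lambda>i. c * v i) i) = (\<lambda>i. c * (S v i + T v i))"
    using linD(3)[OF T v, of c] linD(3)[OF S v, of c] by (simp add: algebra_simps)
next
  fix v i assume "i \<notin> basis_idx" then show "S v i + T v i = 0" using linD(4)[OF S] linD(4)[OF T] by simp
qed

lemma lin_smult: assumes T: "lin T" shows "lin (\<lambda>v i. c * T v i)"
  unfolding lin_def
proof (intro conjI allI impI)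
  fix v assume "fs v" then show "fs (\<lambda>i. c * T v i)" using linD(1)[OF T] fs_scale by blast
next
  fix u v assume u: "fs u" and v: "fs v"
  show "(\<lambda>i. c * T (\<lambda>i. u i + v i) i) = (\<lambda>i. c * T u i + c * T v i)"
    using linD(2)[OF T u v] by (simp add: algebra_simps)
next
  fix d v assume v: "fs v"
  show "(\<lambda>i. c * T (\<lambda>i. d * v i) i) = (\<lambda>i. d * (c * T v i))"
    using linD(3)[OF T v, of d] by (simp add: algebra_simps)
next
  fix v i assume "i \<notin> basis_idx" then show "c * T v i = 0" using linD(4)[OF T] by simp
qed

lemma mat_comp: assumes "lin S" "lin T" "finite A" "{k. mat T k j \<noteq> 0} \<subseteq> A"
  shows "mat (S \<circ> T) i j = (\<Sum>k\<in>A. mat T k j * mat S i k)"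
proof -
  have "mat (S \<circ> T) i j = S (T (delta j)) i" by (simp add: mat_def)
  also have "\<dots> = (\<Sum>k\<in>A. T (delta j) k * mat S i k)"
    using assms by (intro lin_apply) (auto simp: mat_def)
  finally show ?thesis by (simp add: mat_def)
qed

lemma mat_add: "mat (\<lambda>v i. S v i + T v i) i j = mat S i j + mat T i j"
  by (simp add: mat_def)
lemma mat_smult: "mat (\<lambda>v i. c * T v i) i j = c * mat T i j"
  by (simp add: mat_def)


definition lev :: "idx \<Rightarrow> real" where "lev i = fst (fst i)"
definition mm :: "idx \<Rightarrow> real" where "mm i = snd (fst i)"
definition flip :: "idx \<Rightarrow> idx" where "flip i = (fst i, \<not> snd i)"
definition levn :: "idx \<Rightarrow> nat" where "levn i = nat \<lfloor>lev i\<rfloor>"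

lemma flip_flip[simp]: "flip (flip i) = i" by (simp add: flip_def)
lemma lev_flip[simp]: "lev (flip i) = lev i" by (simp add: flip_def lev_def)
lemma mm_flip[simp]: "mm (flip i) = mm i" by (simp add: flip_def mm_def)
lemma levn_flip[simp]: "levn (flip i) = levn i" by (simp add: levn_def)
lemma snd_flip[simp]: "snd (flip i) = (\<not> snd i)" by (simp add: flip_def)
lemma fst_flip[simp]: "fst (flip i) = fst i" by (simp add: flip_def)
lemma flip_inj: "inj flip" by (metis flip_flip injI)
lemma flip_eq_iff[simp]: "flip i = flip j \<longleftrightarrow> i = j" by (metis flip_flip)

lemma basis_iff: "i \<in> basis_idx \<longleftrightarrow> (\<exists>n j. j \<le> 2*n+1 \<and> fst i = (real n + 1/2, real j - (real n + 1/2)))"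
  by (cases i) (auto simp: basis_idx_def)

lemma flip_basis[simp]: "flip i \<in> basis_idx \<longleftrightarrow> i \<in> basis_idx"
  by (simp add: basis_iff)

lemma basis_props: assumes "i \<in> basis_idx"
  shows "1/2 \<le> lev i" "- lev i \<le> mm i" "mm i \<le> lev i" "mm i = lev i \<or> mm i \<le> lev i - 1"
    "lev i = real (levn i) + 1/2"
proof -
  obtain n j where nj: "j \<le> 2*n+1" "fst i = (real n + 1/2, real j - (real n + 1/2))"
    using assms basis_iff by blast
  have l: "lev i = real n + 1/2" and m: "mm i = real j - (real n + 1/2)" using nj by (auto simp: lev_def mm_def)
  show "1/2 \<le> lev i" "- lev i \<le> mm i" using l m by auto
  show "mm i \<le> lev i" using l m nj(1) by simp
  show "mm i = lev i \<or> mm i \<le> lev i - 1"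
  proof (cases "j = 2*n+1")
    case True then show ?thesis using l m by simp
  next
    case False then have "j \<le> 2*n" using nj(1) by simp
    then have "real j \<le> 2 * real n" by simp
    then show ?thesis using l m by simp
  qed
  have "\<lfloor>real n + 1/2\<rfloor> = int n" by linarith
  then show "lev i = real (levn i) + 1/2" using l by (simp add: levn_def)
qed

lemma basis_int: assumes "i \<in> basis_idx" "k \<in> basis_idx"
  shows "\<exists>a b. lev k = lev i + of_int a \<and> mm k = mm i + of_int b"
proof -
  obtain n j where nj: "fst i = (real n + 1/2, real j - (real n + 1/2))"
    using assms basis_iff by blast
  obtain n' j' where nj': "fst k = (real n' + 1/2, real j' - (real n' + 1/2))"
    using assms basis_iff by blast
  show ?thesis
    by (rule exI[of _ "int n' - int n"], rule exI[of _ "(int j' - int n') - (int j - int n)"])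
       (use nj nj' in \<open>auto simp: lev_def mm_def\<close>)
qed

definition band :: "nat \<Rightarrow> idx \<Rightarrow> idx set" where
  "band N j = {k \<in> basis_idx. \<bar>lev k - lev j\<bar> \<le> real N \<and> \<bar>mm k - mm j\<bar> \<le> real N}"

lemma band_sub: assumes "j \<in> basis_idx"
  shows "band N j \<subseteq> (\<lambda>(a,b,e). ((lev j + of_int a, mm j + of_int b), e)) ` ({-int N..int N} \<times> {-int N..int N} \<times> UNIV)"
proof
  fix k assume k: "k \<in> band N j"
  then have kb: "k \<in> basis_idx" and d: "\<bar>lev k - lev j\<bar> \<le> real N" "\<bar>mm k - mm j\<bar> \<le> real N"
    by (auto simp: band_def)
  obtain a b where ab: "lev k = lev j + of_int a" "mm k = mm j + of_int b" using basis_int[OF assms kb] by blast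
  have "\<bar>a\<bar> \<le> int N" "\<bar>b\<bar> \<le> int N" using d ab by auto
  then have mem: "(a, b, snd k) \<in> {-int N..int N} \<times> {-int N..int N} \<times> UNIV" by auto
  have "k = (\<lambda>(a,b,e). ((lev j + of_int a, mm j + of_int b), e)) (a, b, snd k)"
    using ab by (cases k) (auto simp: lev_def mm_def)
  then show "k \<in> (\<lambda>(a,b,e). ((lev j + of_int a, mm j + of_int b), e)) ` ({-int N..int N} \<times> {-int N..int N} \<times> UNIV)"
    using mem by blast
qed

lemma finite_band: "j \<in> basis_idx \<Longrightarrow> finite (band N j)"
  by (rule finite_subset[OF band_sub]) auto

lemma card_band: assumes "j \<in> basis_idx" shows "real (card (band N j)) \<le> 2 * (2 * real N + 1)^2"
proof -
  have "card (band N j) \<le> card ((\<lambda>(a,b,e). ((lev j + of_int a, mm j + of_int b), e)) ` ({-int N..int N} \<times> {-int N..int N} \<times> (UNIV :: bool set)))"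
    by (rule card_mono[OF _ band_sub[OF assms]]) auto
  also have "\<dots> \<le> card ({-int N..int N} \<times> {-int N..int N} \<times> (UNIV :: bool set))"
    by (rule card_image_le) auto
  also have "\<dots> = (2 * N + 1) * (2 * N + 1) * 2"
  proof -
    have "nat (2 * int N + 1) = 2 * N + 1" by (simp add: nat_eq_iff)
    then show ?thesis by (simp add: card_cartesian_product)
  qed
  finally have "card (band N j) \<le> (2 * N + 1) * (2 * N + 1) * 2" .
  then have "real (card (band N j)) \<le> real ((2 * N + 1) * (2 * N + 1) * 2)" by linarith
  then show ?thesis by (simp add: power2_eq_square algebra_simps)
qed

lemma band_flip: "k \<in> band N (flip j) \<longleftrightarrow> flip k \<in> band N j"
  by (simp add: band_def)

lemma band_flip_img: "band N (flip j) = flip ` band N j"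
proof
  show "band N (flip j) \<subseteq> flip ` band N j"
    using band_flip by (metis flip_flip image_eqI subsetI)
  show "flip ` band N j \<subseteq> band N (flip j)" by (auto simp: band_flip)
qed

lemma band_sym: "k \<in> band N j \<Longrightarrow> j \<in> basis_idx \<Longrightarrow> j \<in> band N k"
  by (auto simp: band_def abs_minus_commute)

lemma band_trans: "i \<in> band N1 k \<Longrightarrow> k \<in> band N2 j \<Longrightarrow> i \<in> band (N1 + N2) j"
  by (auto simp: band_def)

lemma band_mono: "N1 \<le> N2 \<Longrightarrow> i \<in> band N1 j \<Longrightarrow> i \<in> band N2 j"
  by (auto simp: band_def)

lemma band_self: "j \<in> basis_idx \<Longrightarrow> j \<in> band N j" by (simp add: band_def)


definition G :: "real \<Rightarrow> nat \<Rightarrow> real \<Rightarrow> nat \<Rightarrow> op \<Rightarrow> bool" where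
  "G q N C k T \<longleftrightarrow> lin T \<and> 0 \<le> C \<and>
     (\<forall>i\<in>basis_idx. \<forall>j\<in>basis_idx. mat T i j \<noteq> 0 \<longrightarrow> i \<in> band N j) \<and>
     (\<forall>i\<in>basis_idx. \<forall>j\<in>basis_idx. cmod (mat T i j) \<le> C * (lev i + 1) ^ k) \<and>
     (\<forall>i\<in>basis_idx. \<forall>j\<in>basis_idx. cmod (mat T i j - mat T (flip i) (flip j)) \<le> C * (lev i + 1) ^ k * q powr lev i)"

lemma GD: assumes "G q N C k T"
  shows "lin T" "0 \<le> C" "i \<in> basis_idx \<Longrightarrow> j \<in> basis_idx \<Longrightarrow> mat T i j \<noteq> 0 \<Longrightarrow> i \<in> band N j"
    "i \<in> basis_idx \<Longrightarrow> j \<in> basis_idx \<Longrightarrow> cmod (mat T i j) \<le> C * (lev i + 1) ^ k"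
    "i \<in> basis_idx \<Longrightarrow> j \<in> basis_idx \<Longrightarrow> cmod (mat T i j - mat T (flip i) (flip j)) \<le> C * (lev i + 1) ^ k * q powr lev i"
  using assms unfolding G_def by blast+

lemma mat_out: "lin T \<Longrightarrow> i \<notin> basis_idx \<Longrightarrow> mat T i j = 0"
  by (simp add: mat_def linD(4))

lemma levp: "i \<in> basis_idx \<Longrightarrow> 1 \<le> lev i + 1" using basis_props(1)[of i] by simp

lemma powk_mono: "i \<in> basis_idx \<Longrightarrow> k \<le> k' \<Longrightarrow> (lev i + 1) ^ k \<le> (lev i + 1) ^ k'"
  using levp by (intro power_increasing) auto

context qq begin

lemma G_mono: assumes "G q N C k T" "N \<le> N'" "C \<le> C'" "k \<le> k'"
  shows "G q N' C' k' T"
  unfolding G_def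
proof (intro conjI ballI impI)
  note g = GD[OF assms(1)]
  show "lin T" by (rule g(1))
  show "0 \<le> C'" using g(2) assms(3) by simp
  fix i j assume i: "i \<in> basis_idx" and j: "j \<in> basis_idx"
  show "mat T i j \<noteq> 0 \<Longrightarrow> i \<in> band N' j" using g(3)[OF i j] band_mono[OF assms(2)] by blast
  have pk: "0 \<le> (lev i + 1) ^ k" "(lev i + 1) ^ k \<le> (lev i + 1) ^ k'" using levp[OF i] powk_mono[OF i assms(4)] by auto
  have C': "0 \<le> C'" using g(2) assms(3) by simp
  have cc: "C * (lev i + 1) ^ k \<le> C' * (lev i + 1) ^ k'" by (rule mult_mono[OF assms(3) pk(2) C' pk(1)])
  show "cmod (mat T i j) \<le> C' * (lev i + 1) ^ k'"
    using g(4)[OF i j] cc by linarith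
  have "C * (lev i + 1) ^ k * q powr lev i \<le> C' * (lev i + 1) ^ k' * q powr lev i"
    using cc by (intro mult_right_mono) auto
  then show "cmod (mat T i j - mat T (flip i) (flip j)) \<le> C' * (lev i + 1) ^ k' * q powr lev i"
    using g(5)[OF i j] by linarith
qed

lemma G_add: assumes S: "G q N C1 k S" and T: "G q N C2 k T"
  shows "G q N (C1 + C2) k (\<lambda>v i. S v i + T v i)"
  unfolding G_def mat_add
proof (intro conjI ballI impI)
  note s = GD[OF S] and t = GD[OF T]
  show "lin (\<lambda>v i. S v i + T v i)" using lin_add s(1) t(1) by blast
  show "0 \<le> C1 + C2" using s(2) t(2) by simp
  fix i j assume i: "i \<in> basis_idx" and j: "j \<in> basis_idx"
  show "mat S i j + mat T i j \<noteq> 0 \<Longrightarrow> i \<in> band N j" using s(3)[OF i j] t(3)[OF i j] by (metis add_0)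
  show "cmod (mat S i j + mat T i j) \<le> (C1 + C2) * (lev i + 1) ^ k"
    using s(4)[OF i j] t(4)[OF i j] norm_triangle_ineq[of "mat S i j" "mat T i j"] by (simp add: algebra_simps)
  have "cmod (mat S i j + mat T i j - (mat S (flip i) (flip j) + mat T (flip i) (flip j)))
     \<le> cmod (mat S i j - mat S (flip i) (flip j)) + cmod (mat T i j - mat T (flip i) (flip j))"
    by (rule order_trans[OF _ norm_triangle_ineq]) (simp add: algebra_simps)
  then show "cmod (mat S i j + mat T i j - (mat S (flip i) (flip j) + mat T (flip i) (flip j))) \<le> (C1 + C2) * (lev i + 1) ^ k * q powr lev i"
    using s(5)[OF i j] t(5)[OF i j] by (simp add: algebra_simps)
qed

lemma G_smult: assumes T: "G q N C k T"
  shows "G q N (cmod c * C) k (\<lambda>v i. c * T v i)"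
  unfolding G_def mat_smult
proof (intro conjI ballI impI)
  note t = GD[OF T]
  show "lin (\<lambda>v i. c * T v i)" using lin_smult t(1) by blast
  show "0 \<le> cmod c * C" using t(2) by simp
  fix i j assume i: "i \<in> basis_idx" and j: "j \<in> basis_idx"
  show "c * mat T i j \<noteq> 0 \<Longrightarrow> i \<in> band N j" using t(3)[OF i j] by auto
  show "cmod (c * mat T i j) \<le> cmod c * C * (lev i + 1) ^ k"
    using t(4)[OF i j] by (simp add: norm_mult mult.assoc mult_left_mono)
  have "cmod (c * mat T i j - c * mat T (flip i) (flip j)) = cmod c * cmod (mat T i j - mat T (flip i) (flip j))"
    by (simp add: norm_mult[symmetric] algebra_simps)
  also have "\<dots> \<le> cmod c * (C * (lev i + 1) ^ k * q powr lev i)" using t(5)[OF i j] by (simp add: mult_left_mono)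
  finally show "cmod (c * mat T i j - c * mat T (flip i) (flip j)) \<le> cmod c * C * (lev i + 1) ^ k * q powr lev i"
    by (simp add: mult.assoc)
qed


lemma sum_bound: assumes "finite A" "real (card A) \<le> B" "\<And>k. k \<in> A \<Longrightarrow> cmod (f k) \<le> b" "0 \<le> b"
  shows "cmod (\<Sum>k\<in>A. f k) \<le> B * b"
proof -
  have "cmod (\<Sum>k\<in>A. f k) \<le> (\<Sum>k\<in>A. cmod (f k))" by (rule norm_sum)
  also have "\<dots> \<le> (\<Sum>k\<in>A. b)" using assms(3) by (rule sum_mono)
  also have "\<dots> = real (card A) * b" by simp
  also have "\<dots> \<le> B * b" using assms(2,4) by (rule mult_right_mono)
  finally show ?thesis .
qed

lemma lev_shift: assumes i: "i \<in> basis_idx" and d: "\<bar>lev k - lev i\<bar> \<le> real N" and k: "k \<in> basis_idx"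
  shows "(lev k + 1) ^ p \<le> (real N + 1) ^ p * (lev i + 1) ^ p"
    and "q powr lev k \<le> q powr (- real N) * q powr lev i"
proof -
  have li: "0 \<le> lev i" "0 \<le> lev k" using basis_props(1) i k by fastforce+
  have "lev k + 1 \<le> (real N + 1) * (lev i + 1)" using d li by (simp add: algebra_simps) (smt (verit) mult_nonneg_nonneg of_nat_0_le_iff)
  then have "(lev k + 1) ^ p \<le> ((real N + 1) * (lev i + 1)) ^ p" using li by (intro power_mono) auto
  then show "(lev k + 1) ^ p \<le> (real N + 1) ^ p * (lev i + 1) ^ p" by (simp add: power_mult_distrib)
  have "q powr lev k \<le> q powr (- real N + lev i)" using d by (intro powr_anti) auto
  then show "q powr lev k \<le> q powr (- real N) * q powr lev i" using powr_add[of q "- real N" "lev i"] by simp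
qed

lemma G_comp: assumes S: "G q N1 C1 k1 S" and T: "G q N2 C2 k2 T"
  shows "G q (N1 + N2) (2 * (2 * real N2 + 1)^2 * C1 * C2 * (real N1 + 1) ^ k2 * q powr (- real N1) * 2) (k1 + k2) (S \<circ> T)"
proof -
  note s = GD[OF S] and t = GD[OF T]
  define B where "B = 2 * (2 * real N2 + 1)^2"
  define P where "P = (real N1 + 1) ^ k2"
  define Qf where "Qf = q powr (- real N1)"
  have B0: "0 \<le> B" and P1: "1 \<le> P"
    unfolding B_def P_def by (auto intro!: one_le_power)
  have Qf1: "1 \<le> Qf" unfolding Qf_def using powr_anti[of "- real N1" 0] q0 by simp
  have C0: "0 \<le> C1" "0 \<le> C2" using s(2) t(2) .
  have matc: "mat (S \<circ> T) i j = (\<Sum>k\<in>band N2 j. mat T k j * mat S i k)" if j: "j \<in> basis_idx" for i j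
  proof (rule mat_comp[OF s(1) t(1) finite_band[OF j]])
    show "{k. mat T k j \<noteq> 0} \<subseteq> band N2 j"
    proof
      fix k assume "k \<in> {k. mat T k j \<noteq> 0}"
      then have nz: "mat T k j \<noteq> 0" by simp
      then have "k \<in> basis_idx" using mat_out[OF t(1)] by blast
      then show "k \<in> band N2 j" using t(3)[OF _ j nz] by blast
    qed
  qed
  have bandS: "i \<in> band N1 k" if "i \<in> basis_idx" "k \<in> basis_idx" "mat S i k \<noteq> 0 \<or> mat S (flip i) (flip k) \<noteq> 0" for i k
    using that s(3)[of i k] s(3)[of "flip i" "flip k"] by (auto simp: band_def)
  have t1: "cmod (mat T k j * mat S i k) \<le> C1 * C2 * P * (lev i + 1) ^ (k1 + k2)"
    if i: "i \<in> basis_idx" and j: "j \<in> basis_idx" and k: "k \<in> band N2 j" for i j k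
  proof (cases "mat S i k = 0")
    case True then show ?thesis using C0 levp[OF i] P1 by simp
  next
    case False
    have kb: "k \<in> basis_idx" using k by (simp add: band_def)
    have d: "\<bar>lev k - lev i\<bar> \<le> real N1" using bandS[OF i kb] False by (auto simp: band_def abs_minus_commute)
    have "cmod (mat T k j) \<le> C2 * (lev k + 1) ^ k2" using t(4)[OF kb j] .
    also have "\<dots> \<le> C2 * (P * (lev i + 1) ^ k2)" unfolding P_def using lev_shift(1)[OF i d kb] C0 by (intro mult_left_mono) auto
    finally have a: "cmod (mat T k j) \<le> C2 * (P * (lev i + 1) ^ k2)" .
    have "cmod (mat T k j * mat S i k) = cmod (mat T k j) * cmod (mat S i k)" by (simp add: norm_mult)
    also have "\<dots> \<le> (C2 * (P * (lev i + 1) ^ k2)) * (C1 * (lev i + 1) ^ k1)"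
      using a s(4)[OF i kb] C0 P1 levp[OF i] by (intro mult_mono) auto
    also have "\<dots> = C1 * C2 * P * (lev i + 1) ^ (k1 + k2)" by (simp add: power_add algebra_simps)
    finally show ?thesis .
  qed
  have t2: "cmod (mat T k j * mat S i k - mat T (flip k) (flip j) * mat S (flip i) (flip k))
      \<le> 2 * (C1 * C2 * P * Qf * (lev i + 1) ^ (k1 + k2) * q powr lev i)"
    if i: "i \<in> basis_idx" and j: "j \<in> basis_idx" and k: "k \<in> band N2 j" for i j k
  proof (cases "mat S i k = 0 \<and> mat S (flip i) (flip k) = 0")
    case True then show ?thesis using C0 levp[OF i] P1 Qf1 by simp
  next
    case False
    have kb: "k \<in> basis_idx" using k by (simp add: band_def)
    have d: "\<bar>lev k - lev i\<bar> \<le> real N1" using bandS[OF i kb] False by (auto simp: band_def abs_minus_commute)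
    note sh = lev_shift[OF i d kb]
    have L0: "0 \<le> (lev i + 1) ^ k1" "0 \<le> (lev i + 1) ^ k2" "0 \<le> q powr lev i" using levp[OF i] by auto
    have "cmod (mat T k j - mat T (flip k) (flip j)) \<le> C2 * (lev k + 1) ^ k2 * q powr lev k" using t(5)[OF kb j] .
    also have "\<dots> \<le> C2 * (P * (lev i + 1) ^ k2) * (Qf * q powr lev i)"
      unfolding P_def Qf_def using sh C0 levp[OF i] levp[OF kb] by (intro mult_mono mult_left_mono) auto
    finally have a: "cmod (mat T k j - mat T (flip k) (flip j)) \<le> C2 * (P * (lev i + 1) ^ k2) * (Qf * q powr lev i)" .
    have "cmod (mat T (flip k) (flip j)) \<le> C2 * (lev k + 1) ^ k2" using t(4)[of "flip k" "flip j"] kb j by simp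
    also have "\<dots> \<le> C2 * (P * (lev i + 1) ^ k2)"
      unfolding P_def using sh C0 by (intro mult_left_mono) auto
    also have "\<dots> \<le> C2 * (P * (lev i + 1) ^ k2) * Qf"
      using mult_left_mono[OF Qf1, of "C2 * (P * (lev i + 1) ^ k2)"] C0 P1 L0 by simp
    finally have b: "cmod (mat T (flip k) (flip j)) \<le> C2 * (P * (lev i + 1) ^ k2) * Qf" .
    have e: "mat T k j * mat S i k - mat T (flip k) (flip j) * mat S (flip i) (flip k)
       = mat S i k * (mat T k j - mat T (flip k) (flip j)) + (mat S i k - mat S (flip i) (flip k)) * mat T (flip k) (flip j)"
      by (simp add: algebra_simps)
    have "cmod (mat T k j * mat S i k - mat T (flip k) (flip j) * mat S (flip i) (flip k))
       \<le> cmod (mat S i k) * cmod (mat T k j - mat T (flip k) (flip j)) + cmod (mat S i k - mat S (flip i) (flip k)) * cmod (mat T (flip k) (flip j))"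
      unfolding e by (rule order_trans[OF norm_triangle_ineq]) (simp add: norm_mult)
    also have "\<dots> \<le> (C1 * (lev i + 1) ^ k1) * (C2 * (P * (lev i + 1) ^ k2) * (Qf * q powr lev i))
        + (C1 * (lev i + 1) ^ k1 * q powr lev i) * (C2 * (P * (lev i + 1) ^ k2) * Qf)"
      using s(4)[OF i kb] s(5)[OF i kb] a b C0 L0 by (intro add_mono mult_mono) auto
    also have "\<dots> = 2 * (C1 * C2 * P * Qf * (lev i + 1) ^ (k1 + k2) * q powr lev i)"
      by (simp add: power_add algebra_simps)
    finally show ?thesis .
  qed
  show ?thesis
    unfolding G_def B_def[symmetric] P_def[symmetric] Qf_def[symmetric]
  proof (intro conjI ballI impI)
    show "lin (S \<circ> T)" using lin_comp s(1) t(1) by blast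
    show "0 \<le> B * C1 * C2 * P * Qf * 2" using B0 C0 P1 Qf1 by simp
    fix i j assume i: "i \<in> basis_idx" and j: "j \<in> basis_idx"
    show "mat (S \<circ> T) i j \<noteq> 0 \<Longrightarrow> i \<in> band (N1 + N2) j"
    proof -
      assume "mat (S \<circ> T) i j \<noteq> 0"
      then obtain k where k: "k \<in> band N2 j" "mat T k j * mat S i k \<noteq> 0"
        unfolding matc[OF j] by (meson sum.neutral)
      have kb: "k \<in> basis_idx" using k by (simp add: band_def)
      have "i \<in> band N1 k" using s(3)[OF i kb] k by simp
      then show ?thesis using band_trans k by blast
    qed
    have L0: "0 \<le> (lev i + 1) ^ (k1 + k2)" using levp[OF i] by simp
    have "cmod (mat (S \<circ> T) i j) \<le> B * (C1 * C2 * P * (lev i + 1) ^ (k1 + k2))"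
      unfolding matc[OF j] B_def
      by (rule sum_bound[OF finite_band[OF j] card_band[OF j]]) (use t1[OF i j] C0 P1 L0 in auto)
    also have "\<dots> \<le> B * C1 * C2 * P * Qf * 2 * (lev i + 1) ^ (k1 + k2)"
    proof -
      have "B * (C1 * C2 * P * (lev i + 1) ^ (k1 + k2)) = (B * C1 * C2 * P * (lev i + 1) ^ (k1 + k2)) * 1" by simp
      also have "\<dots> \<le> (B * C1 * C2 * P * (lev i + 1) ^ (k1 + k2)) * (Qf * 2)"
        using Qf1 B0 C0 P1 L0 by (intro mult_left_mono) auto
      finally show ?thesis by (simp add: algebra_simps)
    qed
    finally show "cmod (mat (S \<circ> T) i j) \<le> B * C1 * C2 * P * Qf * 2 * (lev i + 1) ^ (k1 + k2)" .
    have fj: "flip j \<in> basis_idx" using j by simp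
    have "mat (S \<circ> T) (flip i) (flip j) = (\<Sum>k\<in>flip ` band N2 j. mat T k (flip j) * mat S (flip i) k)"
      unfolding matc[OF fj] band_flip_img ..
    also have "\<dots> = (\<Sum>k\<in>band N2 j. mat T (flip k) (flip j) * mat S (flip i) (flip k))"
      by (subst sum.reindex) (auto intro: inj_on_subset[OF flip_inj])
    finally have mf: "mat (S \<circ> T) (flip i) (flip j) = (\<Sum>k\<in>band N2 j. mat T (flip k) (flip j) * mat S (flip i) (flip k))" .
    have "cmod (mat (S \<circ> T) i j - mat (S \<circ> T) (flip i) (flip j))
       = cmod (\<Sum>k\<in>band N2 j. mat T k j * mat S i k - mat T (flip k) (flip j) * mat S (flip i) (flip k))"
      unfolding matc[OF j] mf by (simp add: sum_subtractf)
    also have "\<dots> \<le> B * (2 * (C1 * C2 * P * Qf * (lev i + 1) ^ (k1 + k2) * q powr lev i))"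
      unfolding B_def
      by (rule sum_bound[OF finite_band[OF j] card_band[OF j]]) (use t2[OF i j] C0 P1 Qf1 L0 in auto)
    also have "\<dots> = B * C1 * C2 * P * Qf * 2 * (lev i + 1) ^ (k1 + k2) * q powr lev i" by (simp add: algebra_simps)
    finally show "cmod (mat (S \<circ> T) i j - mat (S \<circ> T) (flip i) (flip j)) \<le> B * C1 * C2 * P * Qf * 2 * (lev i + 1) ^ (k1 + k2) * q powr lev i" .
  qed
qed

end


lemma fst_lev: "fst i = (lev i, mm i)" by (simp add: lev_def mm_def)

lemma mop_eq: assumes "finite A" "{j. v j \<noteq> 0} \<subseteq> A"
  shows "mop M v i = (if i \<in> basis_idx then (\<Sum>j\<in>A \<inter> basis_idx. M i j * v j) else 0)"
proof (cases "i \<in> basis_idx")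
  case True
  have "(\<Sum>j\<in>{j\<in>basis_idx. v j \<noteq> 0}. M i j * v j) = (\<Sum>j\<in>A \<inter> basis_idx. M i j * v j)"
    using assms by (intro sum.mono_neutral_left) auto
  then show ?thesis using True by (simp add: mop_def)
qed (simp add: mop_def)

lemma lin_mop: assumes fin: "\<And>j. finite {i. M i j \<noteq> 0}" shows "lin (mop M)"
  unfolding lin_def
proof (intro conjI allI impI)
  fix v assume v: "fs v"
  have "{i. mop M v i \<noteq> 0} \<subseteq> (\<Union>j\<in>{j. v j \<noteq> 0}. {i. M i j \<noteq> 0})"
  proof
    fix i assume "i \<in> {i. mop M v i \<noteq> 0}"
    then have "(\<Sum>j\<in>{j\<in>basis_idx. v j \<noteq> 0}. M i j * v j) \<noteq> 0" by (auto simp: mop_def split: if_splits)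
    then obtain j where j: "j \<in> {j\<in>basis_idx. v j \<noteq> 0}" "M i j * v j \<noteq> 0" by (meson sum.neutral)
    have "j \<in> {j. v j \<noteq> 0}" "i \<in> {i. M i j \<noteq> 0}" using j by auto
    then show "i \<in> (\<Union>j\<in>{j. v j \<noteq> 0}. {i. M i j \<noteq> 0})" by (rule UN_I)
  qed
  then show "fs (mop M v)" unfolding fs_def
    by (rule finite_subset) (use v fin in \<open>auto simp: fs_def\<close>)
next
  fix u v assume u: "fs u" and v: "fs v"
  let ?A = "{j. u j \<noteq> 0} \<union> {j. v j \<noteq> 0}"
  have fA: "finite ?A" using u v by (auto simp: fs_def)
  show "mop M (\<lambda>i. u i + v i) = (\<lambda>i. mop M u i + mop M v i)"
  proof
    fix i
    show "mop M (\<lambda>i. u i + v i) i = mop M u i + mop M v i"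
      by (subst (1 2 3) mop_eq[OF fA]) (auto simp: sum.distrib algebra_simps)
  qed
next
  fix c v assume v: "fs v"
  have fA: "finite {j. v j \<noteq> 0}" using v by (simp add: fs_def)
  show "mop M (\<lambda>i. c * v i) = (\<lambda>i. c * mop M v i)"
  proof
    fix i
    show "mop M (\<lambda>i. c * v i) i = c * mop M v i"
      by (subst (1 2) mop_eq[OF fA]) (auto simp: sum_distrib_left algebra_simps)
  qed
next
  fix v i assume "i \<notin> basis_idx" then show "mop M v i = 0" by (simp add: mop_def)
qed

lemma mat_mop: "j \<in> basis_idx \<Longrightarrow> mat (mop M) i j = (if i \<in> basis_idx then M i j else 0)"
proof -
  assume j: "j \<in> basis_idx"
  have "mop M (delta j) i = (if i \<in> basis_idx then (\<Sum>k\<in>{j} \<inter> basis_idx. M i k * delta j k) else 0)"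
    by (rule mop_eq) (auto simp: delta_def)
  then show ?thesis using j by (simp add: mat_def delta_def)
qed

lemma sgn_of_abs: "\<bar>sgn_of e\<bar> \<le> 1" by (simp add: sgn_of_def)

lemma ent_a_supp: "ent_a q \<sigma> p' p \<noteq> 0 \<Longrightarrow> p' \<in> {(fst p + 1, snd p + 1), (fst p - 1, snd p + 1), (fst p, snd p + 1)}"
  by (cases p; cases p') (auto simp: ent_a_def split: if_splits)

lemma ent_b_supp: "ent_b q \<sigma> p' p \<noteq> 0 \<Longrightarrow> p' \<in> {(fst p + 1, snd p), (fst p - 1, snd p), (fst p, snd p)}"
  by (cases p; cases p') (auto simp: ent_b_def split: if_splits)

lemma fin_fst: "finite P \<Longrightarrow> finite {i::idx. fst i \<in> P}"
proof -
  assume "finite P"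
  then have "finite (P \<times> (UNIV :: bool set))" by simp
  moreover have "{i::idx. fst i \<in> P} = P \<times> UNIV" by auto
  ultimately show ?thesis by simp
qed

context qq begin

lemma G_gen:
  fixes E :: "real \<Rightarrow> idx \<Rightarrow> idx \<Rightarrow> real"
  defines "M \<equiv> (\<lambda>i' i. if snd i' = snd i then complex_of_real (E (sgn_of (snd i)) i' i) else 0)"
  assumes fin: "\<And>i. finite {i'. M i' i \<noteq> 0}"
    and fl: "\<And>\<sigma> i' i. E \<sigma> (flip i') (flip i) = E \<sigma> i' i"
    and nz: "\<And>\<sigma> i' i. i' \<in> basis_idx \<Longrightarrow> i \<in> basis_idx \<Longrightarrow> \<bar>\<sigma>\<bar> \<le> 1 \<Longrightarrow> E \<sigma> i' i \<noteq> 0 \<Longrightarrow> i' \<in> band 1 i"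
    and bd: "\<And>\<sigma> i' i. i' \<in> basis_idx \<Longrightarrow> i \<in> basis_idx \<Longrightarrow> \<bar>\<sigma>\<bar> \<le> 1 \<Longrightarrow> \<bar>E \<sigma> i' i\<bar> \<le> C"
    and df: "\<And>i' i. i' \<in> basis_idx \<Longrightarrow> i \<in> basis_idx \<Longrightarrow> \<bar>E 1 i' i - E (-1) i' i\<bar> \<le> C * q powr lev i'"
    and C0: "0 \<le> C"
  shows "G q 1 C 0 (mop M)"
  unfolding G_def
proof (intro conjI ballI impI)
  show "lin (mop M)" using lin_mop fin by blast
  show "0 \<le> C" by (rule C0)
  fix i j assume i: "i \<in> basis_idx" and j: "j \<in> basis_idx"
  have mm: "mat (mop M) i j = M i j" using mat_mop[OF j] i by simp
  show "mat (mop M) i j \<noteq> 0 \<Longrightarrow> i \<in> band 1 j"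
  proof -
    assume "mat (mop M) i j \<noteq> 0"
    then have "M i j \<noteq> 0" using mm by simp
    then show ?thesis unfolding M_def using nz[OF i j sgn_of_abs] by (auto split: if_splits)
  qed
  have "cmod (M i j) \<le> C" unfolding M_def using bd[OF i j sgn_of_abs] C0 by auto
  then show "cmod (mat (mop M) i j) \<le> C * (lev i + 1) ^ 0" using mm by simp
  have mf: "mat (mop M) (flip i) (flip j) = M (flip i) (flip j)" using mat_mop[of "flip j"] i j by simp
  show "cmod (mat (mop M) i j - mat (mop M) (flip i) (flip j)) \<le> C * (lev i + 1) ^ 0 * q powr lev i"
  proof (cases "snd i = snd j")
    case True
    have "cmod (M i j - M (flip i) (flip j)) = \<bar>E (sgn_of (snd j)) i j - E (sgn_of (\<not> snd j)) i j\<bar>"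
      unfolding M_def using True fl by (simp flip: of_real_diff)
    also have "\<dots> = \<bar>E 1 i j - E (-1) i j\<bar>" by (cases "snd j") (auto simp: sgn_of_def abs_minus_commute)
    also have "\<dots> \<le> C * q powr lev i" using df[OF i j] .
    finally show ?thesis unfolding mm mf by simp
  next
    case False then have "M i j = 0" "M (flip i) (flip j) = 0" unfolding M_def by auto
    then show ?thesis using mm mf C0 by simp
  qed
qed

abbreviation "Cq \<equiv> 4 / (1 - q\<^sup>2)\<^sup>2"

lemma Cq0: "0 \<le> Cq" by simp

lemma band1I: "i \<in> basis_idx \<Longrightarrow> \<bar>lev i - lev j\<bar> \<le> 1 \<and> \<bar>mm i - mm j\<bar> \<le> 1 \<Longrightarrow> i \<in> band 1 j"
  by (simp add: band_def)

lemma G_pi_a: "G q 1 Cq 0 (pi_a q)"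
  unfolding pi_a_def
proof (rule G_gen[where E="\<lambda>\<sigma> i' i. ent_a q \<sigma> (fst i') (fst i)"])
  fix i
  show "finite {i'. (if snd i' = snd i then complex_of_real (ent_a q (sgn_of (snd i)) (fst i') (fst i)) else 0) \<noteq> 0}"
    by (rule finite_subset[OF _ fin_fst[of "{(fst (fst i) + 1, snd (fst i) + 1), (fst (fst i) - 1, snd (fst i) + 1), (fst (fst i), snd (fst i) + 1)}"]])
       (auto dest: ent_a_supp split: if_splits)
next
  fix \<sigma> :: real and i' i :: idx assume i': "i' \<in> basis_idx" and i: "i \<in> basis_idx"
  note bp = basis_props[OF i]
  note P = ent_a_props[OF bp(1-4), of _ "lev i'" "mm i'", folded fst_lev]
  show "\<bar>\<sigma>\<bar> \<le> 1 \<Longrightarrow> ent_a q \<sigma> (fst i') (fst i) \<noteq> 0 \<Longrightarrow> i' \<in> band 1 i" using P(4)[of \<sigma>] i' by (intro band1I) (auto simp: abs_minus_commute)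
  show "\<bar>\<sigma>\<bar> \<le> 1 \<Longrightarrow> \<bar>ent_a q \<sigma> (fst i') (fst i)\<bar> \<le> Cq" using P(1) by blast
next
  fix i' i :: idx assume i': "i' \<in> basis_idx" and i: "i \<in> basis_idx"
  note bp = basis_props[OF i]
  note P = ent_a_props[OF bp(1-4), of 1 "lev i'" "mm i'", folded fst_lev]
  show "\<bar>ent_a q 1 (fst i') (fst i) - ent_a q (-1) (fst i') (fst i)\<bar> \<le> Cq * q powr lev i'"
    using P(2) P(3) by (cases "ent_a q 1 (fst i') (fst i) - ent_a q (-1) (fst i') (fst i) = 0") auto
qed (auto simp: fst_lev)

lemma G_pi_as: "G q 1 Cq 0 (pi_as q)"
  unfolding pi_as_def
proof (rule G_gen[where E="\<lambda>\<sigma> i' i. ent_a q \<sigma> (fst i) (fst i')"])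
  fix i
  show "finite {i'. (if snd i' = snd i then complex_of_real (ent_a q (sgn_of (snd i)) (fst i) (fst i')) else 0) \<noteq> 0}"
    by (rule finite_subset[OF _ fin_fst[of "{(fst (fst i) - 1, snd (fst i) - 1), (fst (fst i) + 1, snd (fst i) - 1), (fst (fst i), snd (fst i) - 1)}"]])
       (auto dest!: ent_a_supp split: if_splits)
next
  fix \<sigma> :: real and i' i :: idx assume i': "i' \<in> basis_idx" and i: "i \<in> basis_idx"
  note bp = basis_props[OF i']
  note P = ent_a_props[OF bp(1-4), of _ "lev i" "mm i", folded fst_lev]
  show "\<bar>\<sigma>\<bar> \<le> 1 \<Longrightarrow> ent_a q \<sigma> (fst i) (fst i') \<noteq> 0 \<Longrightarrow> i' \<in> band 1 i" using P(4)[of \<sigma>] i' by (intro band1I) (auto simp: abs_minus_commute)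
  show "\<bar>\<sigma>\<bar> \<le> 1 \<Longrightarrow> \<bar>ent_a q \<sigma> (fst i) (fst i')\<bar> \<le> Cq" using P(1) by blast
next
  fix i' i :: idx assume i': "i' \<in> basis_idx" and i: "i \<in> basis_idx"
  note bp = basis_props[OF i']
  note P = ent_a_props[OF bp(1-4), of 1 "lev i" "mm i", folded fst_lev]
  show "\<bar>ent_a q 1 (fst i) (fst i') - ent_a q (-1) (fst i) (fst i')\<bar> \<le> Cq * q powr lev i'"
    using P(2) by simp
qed (auto simp: fst_lev)

lemma G_pi_b: "G q 1 Cq 0 (pi_b q)"
  unfolding pi_b_def
proof (rule G_gen[where E="\<lambda>\<sigma> i' i. ent_b q \<sigma> (fst i') (fst i)"])
  fix i
  show "finite {i'. (if snd i' = snd i then complex_of_real (ent_b q (sgn_of (snd i)) (fst i') (fst i)) else 0) \<noteq> 0}"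
    by (rule finite_subset[OF _ fin_fst[of "{(fst (fst i) + 1, snd (fst i)), (fst (fst i) - 1, snd (fst i)), (fst (fst i), snd (fst i))}"]])
       (auto dest: ent_b_supp split: if_splits)
next
  fix \<sigma> :: real and i' i :: idx assume i': "i' \<in> basis_idx" and i: "i \<in> basis_idx"
  note bp = basis_props[OF i]
  note P = ent_b_props[OF bp(1-3), of _ "lev i'" "mm i'", folded fst_lev]
  show "\<bar>\<sigma>\<bar> \<le> 1 \<Longrightarrow> ent_b q \<sigma> (fst i') (fst i) \<noteq> 0 \<Longrightarrow> i' \<in> band 1 i" using P(4)[of \<sigma>] i' by (intro band1I) (auto simp: abs_minus_commute)
  show "\<bar>\<sigma>\<bar> \<le> 1 \<Longrightarrow> \<bar>ent_b q \<sigma> (fst i') (fst i)\<bar> \<le> Cq" using P(1) by blast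
next
  fix i' i :: idx assume i': "i' \<in> basis_idx" and i: "i \<in> basis_idx"
  note bp = basis_props[OF i]
  note P = ent_b_props[OF bp(1-3), of 1 "lev i'" "mm i'", folded fst_lev]
  show "\<bar>ent_b q 1 (fst i') (fst i) - ent_b q (-1) (fst i') (fst i)\<bar> \<le> Cq * q powr lev i'"
    using P(2) P(3) by (cases "ent_b q 1 (fst i') (fst i) - ent_b q (-1) (fst i') (fst i) = 0") auto
qed (auto simp: fst_lev)

end


context qq begin

lemma G_id: "G q 0 1 0 id_op"
  unfolding G_def id_op_def
proof (intro conjI ballI impI)
  show "lin (mop (\<lambda>i' i. if i' = i then 1 else 0))" by (rule lin_mop) simp
  fix i j assume i: "i \<in> basis_idx" and j: "j \<in> basis_idx"
  have m: "mat (mop (\<lambda>i' i. if i' = i then 1 else 0)) i j = (if i = j then 1 else 0)"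
    using mat_mop[of j "\<lambda>i' i. if i' = i then 1 else 0" i] j i by auto
  show "mat (mop (\<lambda>i' i. if i' = i then 1 else 0)) i j \<noteq> 0 \<Longrightarrow> i \<in> band 0 j"
    using m band_self[OF j] by (auto split: if_splits)
  show "cmod (mat (mop (\<lambda>i' i. if i' = i then 1 else 0)) i j) \<le> 1 * (lev i + 1) ^ 0" using m by simp
  have "mat (mop (\<lambda>i' i. if i' = i then 1 else 0)) (flip i) (flip j) = (if i = j then 1 else 0)"
    using mat_mop[of "flip j" "\<lambda>i' i. if i' = i then 1 else 0" "flip i"] j i by auto
  then show "cmod (mat (mop (\<lambda>i' i. if i' = i then 1 else 0)) i j - mat (mop (\<lambda>i' i. if i' = i then 1 else 0)) (flip i) (flip j)) \<le> 1 * (lev i + 1) ^ 0 * q powr lev i"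
    using m by simp
qed simp

lemma D_op_eq: "D_op v = (\<lambda>i. if i \<in> basis_idx then complex_of_real (lev i + 1/2) * v (flip i) else 0)"
  unfolding D_op_def lev_def flip_def by simp

lemma lin_D: "lin D_op"
  unfolding lin_def D_op_eq
proof (intro conjI allI impI)
  fix v assume v: "fs v"
  have "{i. (if i \<in> basis_idx then complex_of_real (lev i + 1/2) * v (flip i) else 0) \<noteq> 0} \<subseteq> flip ` {i. v i \<noteq> 0}"
  proof
    fix i assume "i \<in> {i. (if i \<in> basis_idx then complex_of_real (lev i + 1/2) * v (flip i) else 0) \<noteq> 0}"
    then have "v (flip i) \<noteq> 0" by (auto split: if_splits)
    then have "flip i \<in> {i. v i \<noteq> 0}" by simp
    then show "i \<in> flip ` {i. v i \<noteq> 0}" by (metis flip_flip image_eqI)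
  qed
  moreover have "finite (flip ` {i. v i \<noteq> 0})" using v by (intro finite_imageI) (simp add: fs_def)
  ultimately show "fs (\<lambda>i. if i \<in> basis_idx then complex_of_real (lev i + 1/2) * v (flip i) else 0)"
    unfolding fs_def by (rule finite_subset)
qed (auto simp: algebra_simps)

lemma mat_D: "mat D_op i j = (if i \<in> basis_idx \<and> flip i = j then complex_of_real (lev i + 1/2) else 0)"
  by (auto simp: mat_def D_op_eq delta_def)

lemma G_D: "G q 0 1 1 D_op"
  unfolding G_def
proof (intro conjI ballI impI)
  show "lin D_op" by (rule lin_D)
  fix i j assume i: "i \<in> basis_idx" and j: "j \<in> basis_idx"
  show "mat D_op i j \<noteq> 0 \<Longrightarrow> i \<in> band 0 j"
    unfolding mat_D using i by (auto simp: band_def split: if_splits)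
  have l: "0 \<le> lev i" using basis_props(1)[OF i] by simp
  have "cmod (complex_of_real (lev i + 1/2)) \<le> lev i + 1" unfolding norm_of_real using l by simp
  then show "cmod (mat D_op i j) \<le> 1 * (lev i + 1) ^ 1"
    unfolding mat_D using l by (auto simp del: of_real_add of_real_divide)
  have sw: "(i = flip j) = (flip i = j)" by (metis flip_flip)
  have "mat D_op (flip i) (flip j) = mat D_op i j" unfolding mat_D using i by (auto simp add: sw)
  then show "cmod (mat D_op i j - mat D_op (flip i) (flip j)) \<le> 1 * (lev i + 1) ^ 1 * q powr lev i"
    using l q0 by simp
qed simp

lemma G_commut: assumes S: "G q N1 C1 k1 S" and T: "G q N2 C2 k2 T"
  shows "\<exists>N C. G q N C (k1 + k2) (commut S T)"
proof -
  obtain X where X: "G q (N1 + N2) X (k1 + k2) (S \<circ> T)" using G_comp[OF S T] by blast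
  obtain Y where Y: "G q (N2 + N1) Y (k2 + k1) (T \<circ> S)" using G_comp[OF T S] by blast
  have Y': "G q (N1 + N2) (cmod (-1) * Y) (k1 + k2) (\<lambda>v i. (-1) * (T \<circ> S) v i)"
    using G_smult[OF Y, of "-1"] by (simp add: add.commute)
  have X2: "G q (N1 + N2) (max X Y) (k1 + k2) (S \<circ> T)" by (rule G_mono[OF X]) auto
  have Y2: "G q (N1 + N2) (max X Y) (k1 + k2) (\<lambda>v i. (-1) * (T \<circ> S) v i)" by (rule G_mono[OF Y']) auto
  have "commut S T = (\<lambda>v i. (S \<circ> T) v i + (-1) * (T \<circ> S) v i)"
    by (simp add: commut_def fun_eq_iff)
  then show ?thesis using G_add[OF X2 Y2] by auto
qed

lemma G_pi_alg: "x \<in> pi_alg q \<Longrightarrow> \<exists>N C. G q N C 0 x"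
proof (induction x rule: pi_alg.induct)
  case unit then show ?case using G_id by blast
next
  case gen_a then show ?case using G_pi_a by blast
next
  case gen_as then show ?case using G_pi_as by blast
next
  case gen_b then show ?case using G_pi_b by blast
next
  case (add S T)
  obtain N1 C1 N2 C2 where S: "G q N1 C1 0 S" and T: "G q N2 C2 0 T" using add.IH by blast
  have S2: "G q (max N1 N2) (max C1 C2) 0 S" by (rule G_mono[OF S]) auto
  have T2: "G q (max N1 N2) (max C1 C2) 0 T" by (rule G_mono[OF T]) auto
  show ?case using G_add[OF S2 T2] by blast
next
  case (smult T c)
  then show ?case using G_smult by blast
next
  case (mult S T)
  obtain N1 C1 N2 C2 where S: "G q N1 C1 0 S" and T: "G q N2 C2 0 T" using mult.IH by blast
  obtain X where "G q (N1 + N2) X 0 (S \<circ> T)" using G_comp[OF S T] by simp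
  then show ?case by blast
qed

end


definition TB :: "idx set" where "TB = {i \<in> basis_idx. snd i}"

lemma fiber_sub: "{i \<in> TB. levn i = n} \<subseteq> (\<lambda>j. ((real n + 1/2, real j - (real n + 1/2)), True)) ` {0..2*n+1}"
proof
  fix i assume i: "i \<in> {i \<in> TB. levn i = n}"
  then have ib: "i \<in> basis_idx" and s: "snd i" and l: "levn i = n" by (auto simp: TB_def)
  obtain n' j where nj: "j \<le> 2*n'+1" "fst i = (real n' + 1/2, real j - (real n' + 1/2))"
    using ib basis_iff by blast
  have "lev i = real n' + 1/2" using nj by (simp add: lev_def)
  then have "n' = n" using basis_props(5)[OF ib] l by simp
  then have "i = (\<lambda>j. ((real n + 1/2, real j - (real n + 1/2)), True)) j" using nj s by (cases i) auto
  moreover have "j \<in> {0..2*n+1}" using nj \<open>n' = n\<close> by simp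
  ultimately show "i \<in> (\<lambda>j. ((real n + 1/2, real j - (real n + 1/2)), True)) ` {0..2*n+1}" by blast
qed

lemma fiber_finite: "finite {i \<in> TB. levn i = n}"
  by (rule finite_subset[OF fiber_sub]) auto

lemma fiber_card: "real (card {i \<in> TB. levn i = n}) \<le> 2 * real n + 2"
proof -
  have "card {i \<in> TB. levn i = n} \<le> card ((\<lambda>j. ((real n + 1/2, real j - (real n + 1/2)), True)) ` {0..2*n+1})"
    by (rule card_mono[OF _ fiber_sub]) auto
  also have "\<dots> \<le> card {0..2*n+1}" by (rule card_image_le) auto
  finally show ?thesis by simp
qed

lemma TB_basis: "i \<in> TB \<Longrightarrow> i \<in> basis_idx" by (simp add: TB_def)

lemma TB_nonneg_summ:
  fixes b :: "nat \<Rightarrow> real"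
  assumes b0: "\<And>n. 0 \<le> b n" and bs: "summable (\<lambda>n. (2 * real n + 2) * b n)"
  shows "(\<lambda>i. b (levn i)) summable_on TB"
proof (rule nonneg_bdd_above_summable_on)
  show "\<And>x. x \<in> TB \<Longrightarrow> 0 \<le> b (levn x)" using b0 by simp
  show "bdd_above (sum (\<lambda>i. b (levn i)) ` {F. F \<subseteq> TB \<and> finite F})"
  proof (rule bdd_aboveI)
    fix y assume "y \<in> sum (\<lambda>i. b (levn i)) ` {F. F \<subseteq> TB \<and> finite F}"
    then obtain F where F: "F \<subseteq> TB" "finite F" and y: "y = (\<Sum>i\<in>F. b (levn i))" by auto
    have "y = (\<Sum>n\<in>levn ` F. \<Sum>i\<in>{x \<in> F. levn x = n}. b (levn i))"
      unfolding y by (rule sum.image_gen[OF F(2)])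
    also have "\<dots> = (\<Sum>n\<in>levn ` F. real (card {x \<in> F. levn x = n}) * b n)"
      by (intro sum.cong refl) simp
    also have "\<dots> \<le> (\<Sum>n\<in>levn ` F. (2 * real n + 2) * b n)"
    proof (intro sum_mono mult_right_mono b0)
      fix n
      have "card {x \<in> F. levn x = n} \<le> card {i \<in> TB. levn i = n}"
        using F by (intro card_mono fiber_finite) auto
      then show "real (card {x \<in> F. levn x = n}) \<le> 2 * real n + 2" using fiber_card[of n] by linarith
    qed
    also have "\<dots> \<le> (\<Sum>n. (2 * real n + 2) * b n)"
      using bs F(2) b0 by (intro sum_le_suminf) auto
    finally show "y \<le> (\<Sum>n. (2 * real n + 2) * b n)" .
  qed
qed

lemma TB_summ:
  fixes f :: "idx \<Rightarrow> complex" and b :: "nat \<Rightarrow> real"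
  assumes fb: "\<And>i. i \<in> TB \<Longrightarrow> cmod (f i) \<le> b (levn i)"
    and b0: "\<And>n. 0 \<le> b n" and bs: "summable (\<lambda>n. (2 * real n + 2) * b n)"
  shows "(\<lambda>i. norm (f i)) summable_on TB" "f summable_on TB"
proof -
  show "(\<lambda>i. norm (f i)) summable_on TB"
    by (rule Infinite_Sum.abs_summable_on_comparison_test'[OF TB_nonneg_summ[OF b0 bs]]) (use fb in auto)
  then show "f summable_on TB" using summable_on_iff_abs_summable_on_complex by blast
qed


definition wgt :: "complex \<Rightarrow> idx \<Rightarrow> complex" where
  "wgt s i = complex_of_real (lev i + 1/2) powr s"

lemma norm_wt: "i \<in> basis_idx \<Longrightarrow> cmod (wgt s i) = (lev i + 1/2) powr Re s"
  unfolding wgt_def using basis_props(1)[of i] by (subst norm_powr_real_powr) auto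

lemma wt_flip[simp]: "wgt s (flip i) = wgt s i" by (simp add: wgt_def)

lemma wt_bound: assumes i: "i \<in> basis_idx" and R: "\<bar>Re s\<bar> \<le> real R"
  shows "cmod (wgt (- 2 * s) i) \<le> (lev i + 1/2) ^ (2*R)"
proof -
  have l: "1 \<le> lev i + 1/2" using basis_props(1)[OF i] by simp
  have "cmod (wgt (- 2 * s) i) = (lev i + 1/2) powr (-2 * Re s)" using norm_wt[OF i] by simp
  also have "\<dots> \<le> (lev i + 1/2) powr (real (2*R))" using R l by (intro powr_mono) auto
  also have "\<dots> = (lev i + 1/2) ^ (2*R)" using l by (subst powr_realpow) auto
  finally show ?thesis .
qed

context qq begin

definition bR :: "real \<Rightarrow> nat \<Rightarrow> nat \<Rightarrow> nat \<Rightarrow> real" where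
  "bR C k R n = C * (real n + 3/2) ^ k * q powr (real n + 1/2) * (real n + 1) ^ (2*R)"

lemma bR_nonneg: "0 \<le> C \<Longrightarrow> 0 \<le> bR C k R n" unfolding bR_def by simp

lemma bR_summ: assumes C0: "0 \<le> C" shows "summable (\<lambda>n. (2 * real n + 2) * bR C k R n)"
proof (rule summable_comparison_test')
  show "summable (\<lambda>n. (2 * C * 2 ^ k) * ((real n + 1) ^ (k + 2*R + 1) * q ^ n))"
    by (intro summable_mult polygeo_summable q0 q1)
  fix n :: nat
  have a: "(real n + 3/2) ^ k \<le> 2 ^ k * (real n + 1) ^ k"
  proof -
    have "(real n + 3/2) ^ k \<le> (2 * (real n + 1)) ^ k" by (intro power_mono) auto
    also have "\<dots> = 2 ^ k * (real n + 1) ^ k" by (rule power_mult_distrib)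
    finally show ?thesis .
  qed
  have b: "q powr (real n + 1/2) \<le> q ^ n"
  proof -
    have "q powr (real n + 1/2) \<le> q powr (real n)" by (intro powr_anti) auto
    then show ?thesis using q0 by (simp add: powr_realpow)
  qed
  have ab: "(real n + 3/2) ^ k * q powr (real n + 1/2) \<le> (2 ^ k * (real n + 1) ^ k) * q ^ n"
    by (rule mult_mono[OF a b]) auto
  have "norm ((2 * real n + 2) * bR C k R n) = (2 * (real n + 1)) * ((C * ((real n + 3/2) ^ k * q powr (real n + 1/2))) * (real n + 1) ^ (2*R))"
    using C0 by (simp add: bR_def abs_mult algebra_simps)
  also have "\<dots> \<le> (2 * (real n + 1)) * ((C * ((2 ^ k * (real n + 1) ^ k) * q ^ n)) * (real n + 1) ^ (2*R))"
    using ab C0 by (intro mult_left_mono mult_right_mono) auto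
  also have "\<dots> = (2 * C * 2 ^ k) * ((real n + 1) ^ (k + 2*R + 1) * q ^ n)"
    by (simp add: power_add algebra_simps)
  finally show "norm ((2 * real n + 2) * bR C k R n) \<le> (2 * C * 2 ^ k) * ((real n + 1) ^ (k + 2*R + 1) * q ^ n)" .
qed

lemma term_bound:
  assumes d: "\<And>i. i \<in> TB \<Longrightarrow> cmod (d i) \<le> C * (lev i + 1) ^ k * q powr lev i" and C0: "0 \<le> C"
    and i: "i \<in> TB" and R: "\<bar>Re s\<bar> \<le> real R"
  shows "cmod (d i * wgt (- 2 * s) i) \<le> bR C k R (levn i)"
proof -
  have ib: "i \<in> basis_idx" using i by (simp add: TB_def)
  have l: "lev i = real (levn i) + 1/2" using basis_props(5)[OF ib] .
  have "cmod (d i * wgt (- 2 * s) i) = cmod (d i) * cmod (wgt (- 2 * s) i)" by (simp add: norm_mult)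
  also have "\<dots> \<le> (C * (lev i + 1) ^ k * q powr lev i) * (lev i + 1/2) ^ (2*R)"
  proof -
    have nn: "0 \<le> C * (lev i + 1) ^ k * q powr lev i" using C0 basis_props(1)[OF ib] by (intro mult_nonneg_nonneg) auto
    show ?thesis by (rule mult_mono[OF d[OF i] wt_bound[OF ib R] nn norm_ge_zero])
  qed
  also have "\<dots> = bR C k R (levn i)" unfolding bR_def l by (simp add: algebra_simps)
  finally show ?thesis .
qed

lemma holo_TB:
  assumes d: "\<And>i. i \<in> TB \<Longrightarrow> cmod (d i) \<le> C * (lev i + 1) ^ k * q powr lev i" and C0: "0 \<le> C"
  shows "(\<lambda>i. d i * wgt (- 2 * s) i) summable_on TB"
    and "(\<lambda>s. infsum (\<lambda>i. d i * wgt (- 2 * s) i) TB) holomorphic_on UNIV"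
proof -
  have summ: "(\<lambda>i. d i * wgt (- 2 * s) i) summable_on TB" 
    and nsumm: "(\<lambda>i. norm (d i * wgt (- 2 * s) i)) summable_on TB"
    if "\<bar>Re s\<bar> \<le> real R" for s R
    using TB_summ[of "\<lambda>i. d i * wgt (- 2 * s) i" "bR C k R", OF term_bound[OF d C0 _ that] bR_nonneg[OF C0] bR_summ[OF C0]]
    by auto
  show "(\<lambda>i. d i * wgt (- 2 * s) i) summable_on TB"
    by (rule summ[of s "nat \<lceil>\<bar>Re s\<bar>\<rceil>"]) linarith
  let ?g = "\<lambda>s. infsum (\<lambda>i. d i * wgt (- 2 * s) i) TB"
  let ?F = "\<lambda>X s. \<Sum>i\<in>X. d i * wgt (- 2 * s) i"
  have "?g analytic_on UNIV"
    unfolding analytic_on_def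
  proof
    fix z :: complex
    define R where "R = nat \<lceil>\<bar>Re z\<bar>\<rceil> + 1"
    have Rs: "\<bar>Re s\<bar> \<le> real R" if "s \<in> cball z 1" for s
    proof -
      have "\<bar>Re s - Re z\<bar> \<le> cmod (s - z)" using abs_Re_le_cmod[of "s - z"] by simp
      also have "\<dots> \<le> 1" using that by (simp add: dist_norm norm_minus_commute)
      finally show ?thesis unfolding R_def by linarith
    qed
    let ?M = "\<lambda>i. bR C k R (levn i)"
    have Msum: "?M summable_on TB" by (rule TB_nonneg_summ[OF bR_nonneg[OF C0] bR_summ[OF C0]])
    have ulim: "uniform_limit (cball z 1) ?F ?g (finite_subsets_at_top TB)"
      unfolding uniform_limit_iff
    proof (intro allI impI)
      fix e :: real assume e: "0 < e"
      have "(sum ?M \<longlongrightarrow> infsum ?M TB) (finite_subsets_at_top TB)"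
        using Msum by (simp add: has_sum_def[symmetric])
      then have ev1: "\<forall>\<^sub>F X in finite_subsets_at_top TB. dist (sum ?M X) (infsum ?M TB) < e"
        using e tendstoD by blast
      have ev2: "\<forall>\<^sub>F X in finite_subsets_at_top TB. finite X \<and> X \<subseteq> TB" by auto
      show "\<forall>\<^sub>F X in finite_subsets_at_top TB. \<forall>s\<in>cball z 1. dist (?F X s) (?g s) < e"
        using ev1 ev2
      proof eventually_elim
        case (elim X)
        then have X: "finite X" "X \<subseteq> TB" and dM: "dist (sum ?M X) (infsum ?M TB) < e" by auto
        show "\<forall>s\<in>cball z 1. dist (?F X s) (?g s) < e"
        proof
          fix s assume s: "s \<in> cball z 1"
          note R = Rs[OF s]
          have gd: "?g s - ?F X s = infsum (\<lambda>i. d i * wgt (- 2 * s) i) (TB - X)"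
            using infsum_Diff[OF summ[OF R] summable_on_finite[OF X(1)] X(2)] X(1) by simp
          have "dist (?F X s) (?g s) = cmod (?g s - ?F X s)" by (simp add: dist_norm norm_minus_commute)
          also have "\<dots> = cmod (infsum (\<lambda>i. d i * wgt (- 2 * s) i) (TB - X))" by (simp only: gd)
          also have "\<dots> \<le> infsum (\<lambda>i. norm (d i * wgt (- 2 * s) i)) (TB - X)"
            by (rule Infinite_Sum.norm_infsum_bound) (rule summable_on_subset_banach[OF nsumm[OF R]], blast)
          also have "\<dots> \<le> infsum ?M (TB - X)"
          proof (rule infsum_mono)
            show "(\<lambda>i. norm (d i * wgt (- 2 * s) i)) summable_on TB - X"
              by (rule summable_on_subset_banach[OF nsumm[OF R]]) blast
            show "?M summable_on TB - X" by (rule summable_on_subset_banach[OF Msum]) blast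
            fix x assume "x \<in> TB - X"
            then have "x \<in> TB" by blast
            then show "norm (d x * wgt (- 2 * s) x) \<le> ?M x" using term_bound[OF d C0 _ R] by blast
          qed
          also have "\<dots> = infsum ?M TB - sum ?M X"
            using infsum_Diff[OF Msum summable_on_finite[OF X(1)] X(2)] X(1) by simp
          also have "\<dots> < e" using dM by (simp add: dist_norm abs_less_iff)
          finally show "dist (?F X s) (?g s) < e" .
        qed
      qed
    qed
    have "continuous_on (cball z 1) ?g \<and> ?g holomorphic_on ball z 1"
    proof (rule holomorphic_uniform_limit[OF _ ulim])
      show "\<forall>\<^sub>F X in finite_subsets_at_top TB. continuous_on (cball z 1) (?F X) \<and> ?F X holomorphic_on ball z 1"
      proof (intro always_eventually allI conjI)
        fix X
        have h: "?F X holomorphic_on UNIV" unfolding wgt_def by (intro holomorphic_intros)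
        show "continuous_on (cball z 1) (?F X)"
          using holomorphic_on_imp_continuous_on[OF h] continuous_on_subset by blast
        show "?F X holomorphic_on ball z 1" using h holomorphic_on_subset by blast
      qed
      show "\<not> trivial_limit (finite_subsets_at_top TB)" by simp
    qed auto
    then show "\<exists>e>0. ?g holomorphic_on ball z e" by (intro exI[of _ 1]) auto
  qed
  then show "?g holomorphic_on UNIV" by (rule analytic_imp_holomorphic)
qed

end


lemma delta_eq: "(\<lambda>j. if j = i then 1 else 0) = delta i" by (simp add: delta_def fun_eq_iff)

lemma diag1: assumes Y: "lin Y" and i: "i \<in> basis_idx"
  shows "diag_ent (\<lambda>v. gamma_op (Y (absD_pow z v))) i = complex_of_real (sgn_of (snd i)) * (mat Y i i * wgt z i)"
proof -
  have A: "absD_pow z (delta i) = (\<lambda>j. wgt z i * delta i j)"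
    using i by (auto simp: absD_pow_def delta_def wgt_def lev_def fun_eq_iff)
  have "Y (\<lambda>j. wgt z i * delta i j) = (\<lambda>j. wgt z i * Y (delta i) j)" by (rule linD(3)[OF Y fs_delta])
  then show ?thesis using i unfolding diag_ent_def delta_eq A by (simp add: gamma_op_def mat_def mult.commute)
qed

lemma F_op_eq: "F_op v = (\<lambda>i. if i \<in> basis_idx then v (flip i) else 0)"
  unfolding F_op_def flip_def by simp

lemma diag2: assumes x: "lin x" and i: "i \<in> basis_idx"
  shows "diag_ent (\<lambda>v. gamma_op (F_op (commut F_op x v))) i = complex_of_real (sgn_of (snd i)) * (mat x i i - mat x (flip i) (flip i))"
proof -
  have sw: "(flip k = i) = (k = flip i)" for k by (metis flip_flip)
  have Fd: "F_op (delta i) = delta (flip i)"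
    using i unfolding F_op_eq by (auto simp: delta_def fun_eq_iff sw)
  have fi: "flip i \<in> basis_idx" using i by simp
  have "F_op (commut F_op x (delta i)) i = commut F_op x (delta i) (flip i)" using i by (simp add: F_op_eq)
  also have "\<dots> = F_op (x (delta i)) (flip i) - x (F_op (delta i)) (flip i)" by (simp add: commut_def)
  also have "\<dots> = mat x i i - mat x (flip i) (flip i)" unfolding Fd using fi by (simp add: F_op_eq mat_def)
  finally show ?thesis using i unfolding diag_ent_def delta_eq by (simp add: gamma_op_def)
qed

lemma basis_split: "basis_idx = TB \<union> flip ` TB" "TB \<inter> flip ` TB = {}"
proof -
  show "basis_idx = TB \<union> flip ` TB"
  proof
    show "basis_idx \<subseteq> TB \<union> flip ` TB"
    proof
      fix i assume i: "i \<in> basis_idx"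
      show "i \<in> TB \<union> flip ` TB"
      proof (cases "snd i")
        case True then show ?thesis using i by (simp add: TB_def)
      next
        case False
        then have "flip i \<in> TB" using i by (simp add: TB_def)
        then show ?thesis by (metis UnI2 flip_flip image_eqI)
      qed
    qed
    show "TB \<union> flip ` TB \<subseteq> basis_idx" by (auto simp: TB_def)
  qed
  show "TB \<inter> flip ` TB = {}" by (auto simp: TB_def)
qed

lemma pair_sum:
  fixes h :: "idx \<Rightarrow> complex"
  assumes hT: "h summable_on TB" and hF: "(\<lambda>i. h (flip i)) summable_on TB"
  shows "((\<lambda>i. complex_of_real (sgn_of (snd i)) * h i) has_sum infsum (\<lambda>i. h i - h (flip i)) TB) basis_idx"
proof -
  have a: "((\<lambda>i. complex_of_real (sgn_of (snd i)) * h i) has_sum infsum h TB) TB"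
    using hT by (subst has_sum_cong[where g=h]) (auto simp: TB_def sgn_of_def)
  have "((\<lambda>i. complex_of_real (sgn_of (snd i)) * h i) \<circ> flip has_sum - infsum (\<lambda>i. h (flip i)) TB) TB"
  proof -
    have "((\<lambda>i. - h (flip i)) has_sum - infsum (\<lambda>i. h (flip i)) TB) TB"
      using hF by (intro has_sum_uminus[THEN iffD2]) simp
    then show ?thesis by (subst has_sum_cong[where g="\<lambda>i. - h (flip i)"]) (auto simp: TB_def sgn_of_def)
  qed
  then have b: "((\<lambda>i. complex_of_real (sgn_of (snd i)) * h i) has_sum - infsum (\<lambda>i. h (flip i)) TB) (flip ` TB)"
    by (subst has_sum_reindex) (auto intro: inj_on_subset[OF flip_inj])
  have "((\<lambda>i. complex_of_real (sgn_of (snd i)) * h i) has_sum (infsum h TB + - infsum (\<lambda>i. h (flip i)) TB)) (TB \<union> flip ` TB)"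
    by (rule has_sum_Un_disjoint[OF a b basis_split(2)])
  moreover have "infsum h TB + - infsum (\<lambda>i. h (flip i)) TB = infsum (\<lambda>i. h i - h (flip i)) TB"
  proof -
    have n: "((\<lambda>i. - h (flip i)) has_sum - infsum (\<lambda>i. h (flip i)) TB) TB"
      using hF by (intro has_sum_uminus[THEN iffD2]) simp
    have "((\<lambda>i. h i + - h (flip i)) has_sum (infsum h TB + - infsum (\<lambda>i. h (flip i)) TB)) TB"
      by (rule has_sum_add[OF has_sum_infsum[OF hT] n])
    then show ?thesis by (simp add: infsumI)
  qed
  ultimately show ?thesis using basis_split(1) by simp
qed


lemma bb_summ: assumes e: "e + real k < -2" and C0: "0 \<le> C"
  shows "summable (\<lambda>n. (2 * real n + 2) * (C * (real n + 3/2) ^ k * (real n + 1) powr e))"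
proof (rule summable_comparison_test')
  have "summable (\<lambda>n. real n powr (1 + real k + e))" using summable_real_powr_iff e by simp
  then have "summable (\<lambda>n. real (Suc n) powr (1 + real k + e))" by (subst summable_Suc_iff)
  then show "summable (\<lambda>n. (2 * 2 ^ k * C) * real (Suc n) powr (1 + real k + e))" by (rule summable_mult)
  fix n :: nat
  have a: "(real n + 3/2) ^ k \<le> 2 ^ k * (real n + 1) ^ k"
  proof -
    have "(real n + 3/2) ^ k \<le> (2 * (real n + 1)) ^ k" by (intro power_mono) auto
    also have "\<dots> = 2 ^ k * (real n + 1) ^ k" by (rule power_mult_distrib)
    finally show ?thesis .
  qed
  have p: "(real n + 1) * (real n + 1) ^ k * (real n + 1) powr e = real (Suc n) powr (1 + real k + e)"
  proof -
    have "(real n + 1) * (real n + 1) ^ k * (real n + 1) powr e = (real n + 1) powr 1 * (real n + 1) powr (real k) * (real n + 1) powr e"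
      by (simp add: powr_realpow)
    also have "\<dots> = (real n + 1) powr (1 + real k + e)" by (simp add: powr_add)
    finally show ?thesis by (simp add: add.commute)
  qed
  have "norm ((2 * real n + 2) * (C * (real n + 3/2) ^ k * (real n + 1) powr e))
      = (2 * (real n + 1)) * (C * (real n + 3/2) ^ k * (real n + 1) powr e)"
    using C0 by (simp add: abs_mult)
  also have "\<dots> \<le> (2 * (real n + 1)) * (C * (2 ^ k * (real n + 1) ^ k) * (real n + 1) powr e)"
    using a C0 by (intro mult_left_mono mult_right_mono) auto
  also have "\<dots> = (2 * 2 ^ k * C) * ((real n + 1) * (real n + 1) ^ k * (real n + 1) powr e)"
    by (simp add: algebra_simps)
  also have "\<dots> = (2 * 2 ^ k * C) * real (Suc n) powr (1 + real k + e)" by (simp only: p)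
  finally show "norm ((2 * real n + 2) * (C * (real n + 3/2) ^ k * (real n + 1) powr e)) \<le> (2 * 2 ^ k * C) * real (Suc n) powr (1 + real k + e)" .
qed

lemma h_bound: assumes i: "i \<in> basis_idx" and m: "cmod m \<le> C * (lev i + 1) ^ k"
  shows "cmod (m * wgt z i) \<le> C * (real (levn i) + 3/2) ^ k * (real (levn i) + 1) powr (Re z)"
proof -
  have l: "lev i = real (levn i) + 1/2" using basis_props(5)[OF i] .
  have "cmod (m * wgt z i) = cmod m * (lev i + 1/2) powr Re z" using norm_wt[OF i] by (simp add: norm_mult)
  also have "\<dots> \<le> C * (lev i + 1) ^ k * (lev i + 1/2) powr Re z" by (rule mult_right_mono[OF m]) simp
  also have "\<dots> = C * (real (levn i) + 3/2) ^ k * (real (levn i) + 1) powr (Re z)" unfolding l by (simp add: add.commute)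
  finally show ?thesis .
qed

lemma h_summ: assumes Y: "G q N C k Y" and e: "- 2 * Re z + real k < -2"
  shows "(\<lambda>i. mat Y i i * wgt (- 2 * z) i) summable_on TB"
    and "(\<lambda>i. mat Y (flip i) (flip i) * wgt (- 2 * z) i) summable_on TB"
proof -
  have C0: "0 \<le> C" using GD(2)[OF Y] .
  note bs = bb_summ[of "- 2 * Re z" k C, OF e C0]
  have b0: "0 \<le> C * (real n + 3/2) ^ k * (real n + 1) powr (- 2 * Re z)" for n using C0 by simp
  show "(\<lambda>i. mat Y i i * wgt (- 2 * z) i) summable_on TB"
  proof (rule TB_summ(2)[where b="\<lambda>n. C * (real n + 3/2) ^ k * (real n + 1) powr (- 2 * Re z)", OF _ b0 bs])
    fix i assume i: "i \<in> TB"
    have ib: "i \<in> basis_idx" using i by (rule TB_basis)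
    have "cmod (mat Y i i * wgt (- 2 * z) i) \<le> C * (real (levn i) + 3/2) ^ k * (real (levn i) + 1) powr (Re (- 2 * z))"
      by (rule h_bound[OF ib GD(4)[OF Y ib ib]])
    then show "cmod (mat Y i i * wgt (- 2 * z) i) \<le> C * (real (levn i) + 3/2) ^ k * (real (levn i) + 1) powr (- 2 * Re z)"
      by simp
  qed
  show "(\<lambda>i. mat Y (flip i) (flip i) * wgt (- 2 * z) i) summable_on TB"
  proof (rule TB_summ(2)[where b="\<lambda>n. C * (real n + 3/2) ^ k * (real n + 1) powr (- 2 * Re z)", OF _ b0 bs])
    fix i assume i: "i \<in> TB"
    have ib: "i \<in> basis_idx" using i by (rule TB_basis)
    have fb: "flip i \<in> basis_idx" using ib by simp
    have m: "cmod (mat Y (flip i) (flip i)) \<le> C * (lev i + 1) ^ k" using GD(4)[OF Y fb fb] by simp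
    have "cmod (mat Y (flip i) (flip i) * wgt (- 2 * z) i) \<le> C * (real (levn i) + 3/2) ^ k * (real (levn i) + 1) powr (Re (- 2 * z))"
      by (rule h_bound[OF ib m])
    then show "cmod (mat Y (flip i) (flip i) * wgt (- 2 * z) i) \<le> C * (real (levn i) + 3/2) ^ k * (real (levn i) + 1) powr (- 2 * Re z)"
      by simp
  qed
qed


theorem mainTheorem12:
  fixes q :: real
  assumes "0 < q" and "q < 1"
  shows
    "(\<forall>x0 \<in> pi_alg q. \<exists>g :: complex \<Rightarrow> complex.
        g holomorphic_on UNIV
      \<and> (\<forall>s. 1 < Re s \<longrightarrow>
           ((\<lambda>i. diag_ent (gamma_op \<circ> x0 \<circ> absD_pow (-2 * s)) i) has_sum g s) basis_idx)
      \<and> residue (\<lambda>s. g s / s) 0 = g 0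
      \<and> ((\<lambda>i. diag_ent (gamma_op \<circ> F_op \<circ> commut F_op x0) i) has_sum (2 * g 0)) basis_idx)
   \<and> (\<forall>x0 \<in> pi_alg q. \<forall>x1 \<in> pi_alg q. \<forall>x2 \<in> pi_alg q.
       \<exists>(g :: complex \<Rightarrow> complex) (c :: real).
        g meromorphic_on UNIV
      \<and> (\<forall>s. c < Re s \<longrightarrow>
           ((\<lambda>i. diag_ent (gamma_op \<circ> x0 \<circ> commut D_op x1 \<circ> commut D_op x2
                            \<circ> absD_pow (-2 * (s + 1))) i) has_sum g s) basis_idx)
      \<and> residue g 0 = 0)"
proof -
  interpret qq q using assms by unfold_locales
  show ?thesis
  proof (intro conjI ballI)
    fix x0 assume x0: "x0 \<in> pi_alg q"
    obtain N C where G0: "G q N C 0 x0" using G_pi_alg x0 by blast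
    have C0: "0 \<le> C" using GD(2)[OF G0] .
    define d where "d i = mat x0 i i - mat x0 (flip i) (flip i)" for i
    have db: "cmod (d i) \<le> C * (lev i + 1) ^ 0 * q powr lev i" if "i \<in> TB" for i
      using GD(5)[OF G0, of i i] that by (simp add: d_def TB_def)
    define g where "g s = infsum (\<lambda>i. d i * wgt (- 2 * s) i) TB" for s
    have hol: "g holomorphic_on UNIV" using holo_TB(2)[OF db C0] unfolding g_def .
    have lin0: "lin x0" using GD(1)[OF G0] .
    show "\<exists>g :: complex \<Rightarrow> complex.
        g holomorphic_on UNIV
      \<and> (\<forall>s. 1 < Re s \<longrightarrow>
           ((\<lambda>i. diag_ent (gamma_op \<circ> x0 \<circ> absD_pow (-2 * s)) i) has_sum g s) basis_idx)
      \<and> residue (\<lambda>s. g s / s) 0 = g 0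
      \<and> ((\<lambda>i. diag_ent (gamma_op \<circ> F_op \<circ> commut F_op x0) i) has_sum (2 * g 0)) basis_idx"
    proof (intro exI conjI allI impI)
      show "g holomorphic_on UNIV" by (rule hol)
    next
      fix s :: complex assume s: "1 < Re s"
      have e: "- 2 * Re s + real 0 < -2" using s by simp
      note hs = h_summ[OF G0 e]
      have "((\<lambda>i. complex_of_real (sgn_of (snd i)) * (mat x0 i i * wgt (- 2 * s) i)) has_sum
              infsum (\<lambda>i. mat x0 i i * wgt (- 2 * s) i - mat x0 (flip i) (flip i) * wgt (- 2 * s) (flip i)) TB) basis_idx"
        using pair_sum[of "\<lambda>i. mat x0 i i * wgt (- 2 * s) i"] hs by simp
      moreover have "infsum (\<lambda>i. mat x0 i i * wgt (- 2 * s) i - mat x0 (flip i) (flip i) * wgt (- 2 * s) (flip i)) TB = g s"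
        unfolding g_def d_def by (simp add: algebra_simps)
      ultimately have hs2: "((\<lambda>i. complex_of_real (sgn_of (snd i)) * (mat x0 i i * wgt (- 2 * s) i)) has_sum g s) basis_idx"
        by simp
      show "((\<lambda>i. diag_ent (gamma_op \<circ> x0 \<circ> absD_pow (-2 * s)) i) has_sum g s) basis_idx"
        by (subst has_sum_cong[where g="\<lambda>i. complex_of_real (sgn_of (snd i)) * (mat x0 i i * wgt (- 2 * s) i)"])
           (use diag1[OF lin0] hs2 in \<open>auto simp: comp_def\<close>)
    next
      show "residue (\<lambda>s. g s / s) 0 = g 0"
        using residue_simple[of UNIV 0 g] hol by simp
    next
      have w0: "wgt 0 i = 1" if "i \<in> basis_idx" for i
      proof -
        have "lev i + 1/2 \<noteq> 0" using basis_props(1)[OF that] by simp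
        then have "complex_of_real (lev i + 1/2) \<noteq> 0" by (metis of_real_eq_0_iff)
        then show ?thesis unfolding wgt_def by simp
      qed
      have dsum: "d summable_on TB"
      proof -
        have "(\<lambda>i. d i * wgt (- 2 * 0) i) summable_on TB" by (rule holo_TB(1)[OF db C0])
        then show ?thesis by (rule summable_on_cong[THEN iffD1, rotated]) (simp add: w0 TB_def)
      qed
      have dflip: "d (flip i) = - d i" for i by (simp add: d_def)
      have dfsum: "(\<lambda>i. d (flip i)) summable_on TB"
        unfolding dflip using dsum by (simp add: summable_on_uminus)
      have g0: "g 0 = infsum d TB"
        unfolding g_def by (rule infsum_cong) (simp add: w0 TB_def)
      have "((\<lambda>i. complex_of_real (sgn_of (snd i)) * d i) has_sum infsum (\<lambda>i. d i - d (flip i)) TB) basis_idx"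
        by (rule pair_sum[OF dsum dfsum])
      moreover have "infsum (\<lambda>i. d i - d (flip i)) TB = 2 * g 0"
      proof -
        have "infsum (\<lambda>i. d i - d (flip i)) TB = infsum (\<lambda>i. 2 * d i) TB" unfolding dflip by simp
        also have "\<dots> = 2 * infsum d TB" by (rule infsum_cmult_right) (use dsum in simp)
        finally show ?thesis using g0 by simp
      qed
      ultimately have hs2: "((\<lambda>i. complex_of_real (sgn_of (snd i)) * d i) has_sum 2 * g 0) basis_idx" by simp
      show "((\<lambda>i. diag_ent (gamma_op \<circ> F_op \<circ> commut F_op x0) i) has_sum (2 * g 0)) basis_idx"
        by (subst has_sum_cong[where g="\<lambda>i. complex_of_real (sgn_of (snd i)) * d i"])
           (use diag2[OF lin0] hs2 in \<open>auto simp: comp_def d_def\<close>)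
    qed
  next
    fix x0 x1 x2 assume x0: "x0 \<in> pi_alg q" and x1: "x1 \<in> pi_alg q" and x2: "x2 \<in> pi_alg q"
    obtain N0 C0' where G0: "G q N0 C0' 0 x0" using G_pi_alg x0 by blast
    obtain N1 C1 where G1: "G q N1 C1 0 x1" using G_pi_alg x1 by blast
    obtain N2 C2 where G2: "G q N2 C2 0 x2" using G_pi_alg x2 by blast
    obtain M1 D1 where Gc1: "G q M1 D1 (1 + 0) (commut D_op x1)" using G_commut[OF G_D G1] by blast
    obtain M2 D2 where Gc2: "G q M2 D2 (1 + 0) (commut D_op x2)" using G_commut[OF G_D G2] by blast
    obtain Na Ca where Ga: "G q Na Ca (0 + (1 + 0)) (x0 \<circ> commut D_op x1)" using G_comp[OF G0 Gc1] by blast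
    obtain NY CY where GY: "G q NY CY ((0 + (1 + 0)) + (1 + 0)) (x0 \<circ> commut D_op x1 \<circ> commut D_op x2)"
      using G_comp[OF Ga Gc2] by blast
    define Y where "Y = x0 \<circ> commut D_op x1 \<circ> commut D_op x2"
    have GY2: "G q NY CY 2 Y" using GY unfolding Y_def by (simp add: numeral_2_eq_2)
    have CY0: "0 \<le> CY" using GD(2)[OF GY2] .
    define d where "d i = mat Y i i - mat Y (flip i) (flip i)" for i
    have db: "cmod (d i) \<le> CY * (lev i + 1) ^ 2 * q powr lev i" if "i \<in> TB" for i
      using GD(5)[OF GY2, of i i] that by (simp add: d_def TB_def)
    define g1 where "g1 z = infsum (\<lambda>i. d i * wgt (- 2 * z) i) TB" for z
    have hol1: "g1 holomorphic_on UNIV" using holo_TB(2)[OF db CY0] unfolding g1_def .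
    define g where "g s = g1 (s + 1)" for s
    have hol: "g holomorphic_on UNIV"
    proof -
      have "g1 \<circ> (\<lambda>s. s + 1) holomorphic_on UNIV"
        by (rule holomorphic_on_compose) (auto intro!: holomorphic_intros holomorphic_on_subset[OF hol1])
      moreover have "g = (\<lambda>s. g1 (s + 1))" by (simp add: g_def fun_eq_iff)
      ultimately show ?thesis by (simp add: comp_def)
    qed
    have linY: "lin Y" using GD(1)[OF GY2] .
    show "\<exists>(g :: complex \<Rightarrow> complex) (c :: real).
        g meromorphic_on UNIV
      \<and> (\<forall>s. c < Re s \<longrightarrow>
           ((\<lambda>i. diag_ent (gamma_op \<circ> x0 \<circ> commut D_op x1 \<circ> commut D_op x2
                            \<circ> absD_pow (-2 * (s + 1))) i) has_sum g s) basis_idx)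
      \<and> residue g 0 = 0"
    proof (intro exI[of _ g] exI[of _ 1] conjI allI impI)
      show "g meromorphic_on UNIV"
        using hol by (intro analytic_on_imp_meromorphic_on) (simp add: analytic_on_open)
      show "residue g 0 = 0" by (rule residue_holo[OF open_UNIV UNIV_I hol])
    next
      fix s :: complex assume s: "1 < Re s"
      have e: "- 2 * Re (s + 1) + real 2 < -2" using s by simp
      note hs = h_summ[OF GY2 e]
      have "((\<lambda>i. complex_of_real (sgn_of (snd i)) * (mat Y i i * wgt (- 2 * (s + 1)) i)) has_sum
              infsum (\<lambda>i. mat Y i i * wgt (- 2 * (s + 1)) i - mat Y (flip i) (flip i) * wgt (- 2 * (s + 1)) (flip i)) TB) basis_idx"
        using pair_sum[of "\<lambda>i. mat Y i i * wgt (- 2 * (s + 1)) i"] hs by simp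
      moreover have "infsum (\<lambda>i. mat Y i i * wgt (- 2 * (s + 1)) i - mat Y (flip i) (flip i) * wgt (- 2 * (s + 1)) (flip i)) TB = g s"
        unfolding g_def g1_def d_def by (simp add: algebra_simps)
      ultimately have hs2: "((\<lambda>i. complex_of_real (sgn_of (snd i)) * (mat Y i i * wgt (- 2 * (s + 1)) i)) has_sum g s) basis_idx"
        by simp
      show "((\<lambda>i. diag_ent (gamma_op \<circ> x0 \<circ> commut D_op x1 \<circ> commut D_op x2 \<circ> absD_pow (-2 * (s + 1))) i) has_sum g s) basis_idx"
        by (subst has_sum_cong[where g="\<lambda>i. complex_of_real (sgn_of (snd i)) * (mat Y i i * wgt (- 2 * (s + 1)) i)"])
           (use diag1[OF linY] hs2 in \<open>auto simp: comp_def Y_def\<close>)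
    qed
  qed
qed


end
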